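(* Let $L$ be a split regular Hom-Lie color algebra with symmetric root system $\Lambda$. Then: (1) for every $\alpha\in\Lambda$, $L_{\Lambda_\alpha}=H_{\Lambda_\alpha}\oplus V_{\Lambda_\alpha}$ is an ideal of $L$; (2) if $L$ is simple, then every $\alpha\in\Lambda$ is connected to every $\beta\in\Lambda$, and $H=\sum_{\alpha\in\Lambda}[L_\alpha,L_{-\alpha}]$.
   Context: Let $\mathbb{K}$ be a field and $\Gamma$ an abelian group. A bi-character is $\varepsilon:\Gamma\times\Gamma\to\mathbb{K}\setminus\{0\}$ with $\varepsilon(a,b)\varepsilon(b,a)=1$, $\varepsilon(a,b+c)=\varepsilon(a,b)\varepsilon(a,c)$, $\varepsilon(a+b,c)=\varepsilon(a,c)\varepsilon(b,c)$. A Hom-Lie color algebra $(L,[\cdot,\cdot],\phi,\varepsilon)$ is a $\Gamma$-graded space $L=\bigoplus_gL_g$ with bilinear $[\cdot,\cdot]$, $[L_g,L_h]\subset L_{g+h}$, linear $\phi$ with $\phi(L_g)\subset L_g$, $\phi([x,y])=[\phi x,\phi y]$, such that for homogeneous $x,y,z$ of degrees $\bar x,\bar y,\bar z$: $[x,y]=-\varepsilon(\bar x,\bar y)[y,x]$ and $\varepsilon(\bar z,\bar x)[\phi(x),[y,z]]+\varepsilon(\bar x,\bar y)[\phi(y),[z,x]]+\varepsilon(\bar y,\bar z)[\phi(z),[x,y]]=0$; regular means $\phi$ bijective. A subalgebra is a graded subspace $A$ with $[A,A]\subset A$, $\phi(A)=A$; abelian if $[A,A]=0$. An ideal is a graded subspace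 $I$ with $[I,L]\subset I$ and $\phi(I)=I$. $L$ is simple if $[L,L]\neq0$ and its only ideals are $0$ and $L$. $H=\bigoplus_gH_g$ is a maximal abelian graded subalgebra (so $\phi(H_0)=H_0$). For linear $\alpha:H_0\to\mathbb{K}$, $L_\alpha=\{v:[h,v]=\alpha(h)\phi(v)\ \forall h\in H_0\}$; $\Lambda=\{\alpha\in H_0^*\setminus\{0\}:L_\alpha\neq0\}$; $L$ is split if $L=H\oplus(\bigoplus_{\alpha\in\Lambda}L_\alpha)$. $\Lambda$ is symmetric if $\alpha\in\Lambda\Rightarrow-\alpha\in\Lambda$. For $z\in\mathbb{Z}$, $\alpha\phi^{z}:=\alpha\circ(\phi|_{H_0})^{z}$; $\mathbb{N}=\{0,1,2,\dots\}$. Connection: for $\alpha,\beta\in\Lambda$, $\alpha$ is connected to $\beta$ if there exist $k\ge1$ and $\alpha_1,\dots,\alpha_k\in\Lambda$ such that: if $k=1$, $\alpha_1\in\{\alpha\phi^{-n}:n\in\mathbb{N}\}\cap\{\pm\beta\phi^{-m}:m\in\mathbb{N}\}$; if $k\ge2$, then $\alpha_1\in\{\alpha\phi^{-n}:n\in\mathbb{N}\}$, for each $i=1,\dots,k-2$ one has $\alpha_1\phi^{-i}+\alpha_2\phi^{-i}+\alpha_3\phi^{-i+1}+\cdots+\alpha_{i+1}\phi^{-1}\in\Lambda$, and $\alpha_1\phi^{-k+1}+\alpha_2\phi^{-k+1}+\alpha_3\phi^{-k+2}+\cdots+\alpha_k\phi^{-1}\in\{\pm\beta\phi^{-m}:m\in\mathbb{N}\}$.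 Connectedness $\sim$ is an equivalence relation on $\Lambda$; $\Lambda_\alpha:=\{\beta\in\Lambda:\beta\sim\alpha\}$. Define $H_{\Lambda_\alpha}:=\mathrm{span}_{\mathbb{K}}\{[L_\beta,L_{-\beta}]:\beta\in\Lambda_\alpha\}\subset H$, $V_{\Lambda_\alpha}:=\bigoplus_{\beta\in\Lambda_\alpha}L_\beta$, and $L_{\Lambda_\alpha}:=H_{\Lambda_\alpha}\oplus V_{\Lambda_\alpha}$. *)

theory Defs
  imports Complex_Main
begin

text \<open>The Hom-Lie color algebra L is the whole type 'v, a vector space over the
field 'k via the scalar multiplication sm; the grading is G :: 'g \<Rightarrow> 'v set
(G g = L_g); br is the bracket, phi the twisting map, eps the bi-character.\<close>

definition bicharacter :: "('g::ab_group_add \<Rightarrow> 'g \<Rightarrow> 'k::field) \<Rightarrow> bool" where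
  "bicharacter eps \<longleftrightarrow>
     (\<forall>a b. eps a b \<noteq> 0) \<and>
     (\<forall>a b. eps a b * eps b a = 1) \<and>
     (\<forall>a b c. eps a (b + c) = eps a b * eps a c) \<and>
     (\<forall>a b c. eps (a + b) c = eps a c * eps b c)"

definition graded_space :: "('k::field \<Rightarrow> 'v::ab_group_add \<Rightarrow> 'v) \<Rightarrow> ('g::ab_group_add \<Rightarrow> 'v set) \<Rightarrow> bool" where
  "graded_space sm G \<longleftrightarrow>
     vector_space sm \<and>
     (\<forall>g. module.subspace sm (G g)) \<and>
     (\<forall>v. \<exists>!c. finite {g. c g \<noteq> 0} \<and> (\<forall>g. c g \<in> G g) \<and> v = sum c {g. c g \<noteq> 0})"

definition hom_lie_color ::
  "('k::field \<Rightarrow> 'v::ab_group_add \<Rightarrow> 'v) \<Rightarrow> ('g::ab_group_add \<Rightarrow> 'v set) \<Rightarrow>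
   ('v \<Rightarrow> 'v \<Rightarrow> 'v) \<Rightarrow> ('v \<Rightarrow> 'v) \<Rightarrow> ('g \<Rightarrow> 'g \<Rightarrow> 'k) \<Rightarrow> bool" where
  "hom_lie_color sm G br phi eps \<longleftrightarrow>
     graded_space sm G \<and> bicharacter eps \<and>
     (\<forall>x y z. br (x + y) z = br x z + br y z) \<and>
     (\<forall>x y z. br x (y + z) = br x y + br x z) \<and>
     (\<forall>a x y. br (sm a x) y = sm a (br x y)) \<and>
     (\<forall>a x y. br x (sm a y) = sm a (br x y)) \<and>
     Vector_Spaces.linear sm sm phi \<and>
     (\<forall>g h x y. x \<in> G g \<longrightarrow> y \<in> G h \<longrightarrow> br x y \<in> G (g + h)) \<and>
     (\<forall>g x. x \<in> G g \<longrightarrow> phi x \<in> G g) \<and>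
     (\<forall>x y. phi (br x y) = br (phi x) (phi y)) \<and>
     (\<forall>g h x y. x \<in> G g \<longrightarrow> y \<in> G h \<longrightarrow> br x y = - sm (eps g h) (br y x)) \<and>
     (\<forall>g h k x y z. x \<in> G g \<longrightarrow> y \<in> G h \<longrightarrow> z \<in> G k \<longrightarrow>
        sm (eps k g) (br (phi x) (br y z)) + sm (eps g h) (br (phi y) (br z x))
        + sm (eps h k) (br (phi z) (br x y)) = 0)"

definition graded_subspace :: "('k::field \<Rightarrow> 'v::ab_group_add \<Rightarrow> 'v) \<Rightarrow> ('g \<Rightarrow> 'v set) \<Rightarrow> 'v set \<Rightarrow> bool" where
  "graded_subspace sm G A \<longleftrightarrow> module.subspace sm A \<and> A \<subseteq> module.span sm (\<Union>g. A \<inter> G g)"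

definition subalgebra :: "('k::field \<Rightarrow> 'v::ab_group_add \<Rightarrow> 'v) \<Rightarrow> ('g \<Rightarrow> 'v set) \<Rightarrow>
   ('v \<Rightarrow> 'v \<Rightarrow> 'v) \<Rightarrow> ('v \<Rightarrow> 'v) \<Rightarrow> 'v set \<Rightarrow> bool" where
  "subalgebra sm G br phi A \<longleftrightarrow> graded_subspace sm G A \<and> (\<forall>x\<in>A. \<forall>y\<in>A. br x y \<in> A) \<and> phi ` A = A"

definition abelian_subalgebra :: "('k::field \<Rightarrow> 'v::ab_group_add \<Rightarrow> 'v) \<Rightarrow> ('g \<Rightarrow> 'v set) \<Rightarrow>
   ('v \<Rightarrow> 'v \<Rightarrow> 'v) \<Rightarrow> ('v \<Rightarrow> 'v) \<Rightarrow> 'v set \<Rightarrow> bool" where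
  "abelian_subalgebra sm G br phi A \<longleftrightarrow> subalgebra sm G br phi A \<and> (\<forall>x\<in>A. \<forall>y\<in>A. br x y = 0)"

definition max_abelian_subalgebra :: "('k::field \<Rightarrow> 'v::ab_group_add \<Rightarrow> 'v) \<Rightarrow> ('g \<Rightarrow> 'v set) \<Rightarrow>
   ('v \<Rightarrow> 'v \<Rightarrow> 'v) \<Rightarrow> ('v \<Rightarrow> 'v) \<Rightarrow> 'v set \<Rightarrow> bool" where
  "max_abelian_subalgebra sm G br phi H \<longleftrightarrow> abelian_subalgebra sm G br phi H \<and>
     (\<forall>A. abelian_subalgebra sm G br phi A \<and> H \<subseteq> A \<longrightarrow> A = H)"

definition hlc_ideal :: "('k::field \<Rightarrow> 'v::ab_group_add \<Rightarrow> 'v) \<Rightarrow> ('g \<Rightarrow> 'v set) \<Rightarrow>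
   ('v \<Rightarrow> 'v \<Rightarrow> 'v) \<Rightarrow> ('v \<Rightarrow> 'v) \<Rightarrow> 'v set \<Rightarrow> bool" where
  "hlc_ideal sm G br phi I \<longleftrightarrow> graded_subspace sm G I \<and> (\<forall>x\<in>I. \<forall>y. br x y \<in> I) \<and> phi ` I = I"

definition hlc_simple :: "('k::field \<Rightarrow> 'v::ab_group_add \<Rightarrow> 'v) \<Rightarrow> ('g \<Rightarrow> 'v set) \<Rightarrow>
   ('v \<Rightarrow> 'v \<Rightarrow> 'v) \<Rightarrow> ('v \<Rightarrow> 'v) \<Rightarrow> bool" where
  "hlc_simple sm G br phi \<longleftrightarrow> (\<exists>x y. br x y \<noteq> 0) \<and>
     (\<forall>I. hlc_ideal sm G br phi I \<longrightarrow> I = {0} \<or> I = UNIV)"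

text \<open>H_0 (degree-zero part of H), and linear forms on H_0, represented
extensionally as functions 'v \<Rightarrow> 'k vanishing outside H_0.\<close>
definition H0 :: "('g::zero \<Rightarrow> 'v set) \<Rightarrow> 'v set \<Rightarrow> 'v set" where
  "H0 G H = H \<inter> G 0"

definition H0dual :: "('k::field \<Rightarrow> 'v::ab_group_add \<Rightarrow> 'v) \<Rightarrow> ('g::zero \<Rightarrow> 'v set) \<Rightarrow> 'v set \<Rightarrow> ('v \<Rightarrow> 'k) set" where
  "H0dual sm G H = {\<alpha>. (\<forall>x\<in>H0 G H. \<forall>y\<in>H0 G H. \<alpha> (x + y) = \<alpha> x + \<alpha> y) \<and>
                       (\<forall>c. \<forall>x\<in>H0 G H. \<alpha> (sm c x) = c * \<alpha> x) \<and>
                       (\<forall>x. x \<notin> H0 G H \<longrightarrow> \<alpha> x = 0)}"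

definition root_space :: "('k::field \<Rightarrow> 'v::ab_group_add \<Rightarrow> 'v) \<Rightarrow> ('g::zero \<Rightarrow> 'v set) \<Rightarrow>
   ('v \<Rightarrow> 'v \<Rightarrow> 'v) \<Rightarrow> ('v \<Rightarrow> 'v) \<Rightarrow> 'v set \<Rightarrow> ('v \<Rightarrow> 'k) \<Rightarrow> 'v set" where
  "root_space sm G br phi H \<alpha> = {v. \<forall>h\<in>H0 G H. br h v = sm (\<alpha> h) (phi v)}"

definition roots :: "('k::field \<Rightarrow> 'v::ab_group_add \<Rightarrow> 'v) \<Rightarrow> ('g::zero \<Rightarrow> 'v set) \<Rightarrow>
   ('v \<Rightarrow> 'v \<Rightarrow> 'v) \<Rightarrow> ('v \<Rightarrow> 'v) \<Rightarrow> 'v set \<Rightarrow> ('v \<Rightarrow> 'k) set" where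
  "roots sm G br phi H = {\<alpha> \<in> H0dual sm G H. \<alpha> \<noteq> (\<lambda>_. 0) \<and> root_space sm G br phi H \<alpha> \<noteq> {0}}"

definition neg_form :: "('v \<Rightarrow> 'k::field) \<Rightarrow> 'v \<Rightarrow> 'k" where
  "neg_form \<alpha> = (\<lambda>h. - \<alpha> h)"

definition split_hlc :: "('k::field \<Rightarrow> 'v::ab_group_add \<Rightarrow> 'v) \<Rightarrow> ('g::zero \<Rightarrow> 'v set) \<Rightarrow>
   ('v \<Rightarrow> 'v \<Rightarrow> 'v) \<Rightarrow> ('v \<Rightarrow> 'v) \<Rightarrow> 'v set \<Rightarrow> bool" where
  "split_hlc sm G br phi H \<longleftrightarrow>
     (\<forall>v. v \<in> module.span sm (H \<union> (\<Union>\<alpha>\<in>roots sm G br phi H. root_space sm G br phi H \<alpha>)))"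

definition symmetric_roots :: "('k::field \<Rightarrow> 'v::ab_group_add \<Rightarrow> 'v) \<Rightarrow> ('g::zero \<Rightarrow> 'v set) \<Rightarrow>
   ('v \<Rightarrow> 'v \<Rightarrow> 'v) \<Rightarrow> ('v \<Rightarrow> 'v) \<Rightarrow> 'v set \<Rightarrow> bool" where
  "symmetric_roots sm G br phi H \<longleftrightarrow>
     (\<forall>\<alpha>\<in>roots sm G br phi H. neg_form \<alpha> \<in> roots sm G br phi H)"

text \<open>alpha phi^{-n} = alpha \<circ> (phi|H_0)^{-n}, extended by 0 outside H_0.
  For regular phi with phi(H_0) = H_0, (phi|H_0)^{-1} is the restriction of inv phi.\<close>
definition shift :: "('v \<Rightarrow> 'v) \<Rightarrow> 'v set \<Rightarrow> ('v \<Rightarrow> 'k::field) \<Rightarrow> nat \<Rightarrow> 'v \<Rightarrow> 'k" where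
  "shift phi H0' \<alpha> n = (\<lambda>h. if h \<in> H0' then \<alpha> (((inv phi) ^^ n) h) else 0)"

definition conn_sum :: "('v \<Rightarrow> 'v) \<Rightarrow> 'v set \<Rightarrow> (nat \<Rightarrow> 'v \<Rightarrow> 'k::field) \<Rightarrow> nat \<Rightarrow> 'v \<Rightarrow> 'k" where
  "conn_sum phi H0' a i = (\<lambda>h. shift phi H0' (a 1) i h +
                              (\<Sum>j\<in>{2..i+1}. shift phi H0' (a j) (i + 2 - j) h))"

definition connected :: "('k::field \<Rightarrow> 'v::ab_group_add \<Rightarrow> 'v) \<Rightarrow> ('g::zero \<Rightarrow> 'v set) \<Rightarrow>
   ('v \<Rightarrow> 'v \<Rightarrow> 'v) \<Rightarrow> ('v \<Rightarrow> 'v) \<Rightarrow> 'v set \<Rightarrow> ('v \<Rightarrow> 'k) \<Rightarrow> ('v \<Rightarrow> 'k) \<Rightarrow> bool" where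
  "connected sm G br phi H \<alpha> \<beta> \<longleftrightarrow>
     (let \<Lambda> = roots sm G br phi H; Z = H0 G H;
          PM = {shift phi Z \<beta> m | m. True} \<union> {shift phi Z (neg_form \<beta>) m | m. True} in
      \<exists>k\<ge>1. \<exists>a :: nat \<Rightarrow> 'v \<Rightarrow> 'k.
        (\<forall>j\<in>{1..k}. a j \<in> \<Lambda>) \<and>
        a 1 \<in> {shift phi Z \<alpha> n | n. True} \<and>
        (if k = 1 then a 1 \<in> PM
         else (\<forall>i\<in>{1..k-2}. conn_sum phi Z a i \<in> \<Lambda>) \<and> conn_sum phi Z a (k - 1) \<in> PM))"

definition root_class :: "('k::field \<Rightarrow> 'v::ab_group_add \<Rightarrow> 'v) \<Rightarrow> ('g::zero \<Rightarrow> 'v set) \<Rightarrow>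
   ('v \<Rightarrow> 'v \<Rightarrow> 'v) \<Rightarrow> ('v \<Rightarrow> 'v) \<Rightarrow> 'v set \<Rightarrow> ('v \<Rightarrow> 'k) \<Rightarrow> ('v \<Rightarrow> 'k) set" where
  "root_class sm G br phi H \<alpha> = {\<beta> \<in> roots sm G br phi H. connected sm G br phi H \<beta> \<alpha>}"

definition brackets :: "('v \<Rightarrow> 'v \<Rightarrow> 'v) \<Rightarrow> 'v set \<Rightarrow> 'v set \<Rightarrow> 'v set" where
  "brackets br A B = {br x y | x y. x \<in> A \<and> y \<in> B}"

definition H_class :: "('k::field \<Rightarrow> 'v::ab_group_add \<Rightarrow> 'v) \<Rightarrow> ('g::zero \<Rightarrow> 'v set) \<Rightarrow>
   ('v \<Rightarrow> 'v \<Rightarrow> 'v) \<Rightarrow> ('v \<Rightarrow> 'v) \<Rightarrow> 'v set \<Rightarrow> ('v \<Rightarrow> 'k) \<Rightarrow> 'v set" where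
  "H_class sm G br phi H \<alpha> = module.span sm
     (\<Union>\<beta>\<in>root_class sm G br phi H \<alpha>.
        brackets br (root_space sm G br phi H \<beta>) (root_space sm G br phi H (neg_form \<beta>)))"

definition V_class :: "('k::field \<Rightarrow> 'v::ab_group_add \<Rightarrow> 'v) \<Rightarrow> ('g::zero \<Rightarrow> 'v set) \<Rightarrow>
   ('v \<Rightarrow> 'v \<Rightarrow> 'v) \<Rightarrow> ('v \<Rightarrow> 'v) \<Rightarrow> 'v set \<Rightarrow> ('v \<Rightarrow> 'k) \<Rightarrow> 'v set" where
  "V_class sm G br phi H \<alpha> = module.span sm
     (\<Union>\<beta>\<in>root_class sm G br phi H \<alpha>. root_space sm G br phi H \<beta>)"

definition L_class :: "('k::field \<Rightarrow> 'v::ab_group_add \<Rightarrow> 'v) \<Rightarrow> ('g::zero \<Rightarrow> 'v set) \<Rightarrow>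
   ('v \<Rightarrow> 'v \<Rightarrow> 'v) \<Rightarrow> ('v \<Rightarrow> 'v) \<Rightarrow> 'v set \<Rightarrow> ('v \<Rightarrow> 'k) \<Rightarrow> 'v set" where
  "L_class sm G br phi H \<alpha> =
     {x + y | x y. x \<in> H_class sm G br phi H \<alpha> \<and> y \<in> V_class sm G br phi H \<alpha>}"

end

theory Submission
  imports Defs
begin

definition cmp :: "('g \<Rightarrow> 'v::ab_group_add set) \<Rightarrow> 'v \<Rightarrow> 'g \<Rightarrow> 'v" where
  "cmp G v = (THE c. finite {g. c g \<noteq> 0} \<and> (\<forall>g. c g \<in> G g) \<and> v = sum c {g. c g \<noteq> 0})"

definition fadd :: "('v \<Rightarrow> 'k::field) \<Rightarrow> ('v \<Rightarrow> 'k) \<Rightarrow> 'v \<Rightarrow> 'k" where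
  "fadd a b = (\<lambda>h. a h + b h)"

locale HLC =
  fixes sm :: "'k::field \<Rightarrow> 'v::ab_group_add \<Rightarrow> 'v"
    and G :: "'g::ab_group_add \<Rightarrow> 'v set"
    and br :: "'v \<Rightarrow> 'v \<Rightarrow> 'v"
    and phi :: "'v \<Rightarrow> 'v"
    and eps :: "'g \<Rightarrow> 'g \<Rightarrow> 'k"
    and H :: "'v set"
  assumes hlc: "hom_lie_color sm G br phi eps"
    and bij: "bij phi"
    and maxab: "max_abelian_subalgebra sm G br phi H"
    and splt: "split_hlc sm G br phi H"
    and symm: "symmetric_roots sm G br phi H"
begin

lemmas HD = hlc[unfolded hom_lie_color_def]
lemma vs: "vector_space sm" using HD[THEN conjunct1] unfolding graded_space_def by (elim conjE)

sublocale vector_space sm by (rule vs)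

lemma lin: "Vector_Spaces.linear sm sm phi" by (rule HD[THEN conjunct2, THEN conjunct2, THEN conjunct2, THEN conjunct2, THEN conjunct2, THEN conjunct2, THEN conjunct1])

sublocale lin: Vector_Spaces.linear sm sm phi by (rule lin)

lemma Gsub: "subspace (G g)" using HD[THEN conjunct1] unfolding graded_space_def by (elim conjE) (erule allE)
lemma decomp: "\<exists>!c. finite {g. c g \<noteq> 0} \<and> (\<forall>g. c g \<in> G g) \<and> v = sum c {g. c g \<noteq> 0}"
  using HD[THEN conjunct1] unfolding graded_space_def by (elim conjE) (erule allE)
lemma bich: "bicharacter eps" by (rule HD[THEN conjunct2, THEN conjunct1])
lemma br_addl: "br (x + y) z = br x z + br y z" by (rule HD[THEN conjunct2, THEN conjunct2, THEN conjunct1, rule_format])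
lemma br_addr: "br x (y + z) = br x y + br x z" by (rule HD[THEN conjunct2, THEN conjunct2, THEN conjunct2, THEN conjunct1, rule_format])
lemma br_scl: "br (sm a x) y = sm a (br x y)" by (rule HD[THEN conjunct2, THEN conjunct2, THEN conjunct2, THEN conjunct2, THEN conjunct1, rule_format])
lemma br_scr: "br x (sm a y) = sm a (br x y)" by (rule HD[THEN conjunct2, THEN conjunct2, THEN conjunct2, THEN conjunct2, THEN conjunct2, THEN conjunct1, rule_format])
lemmas HD7 = HD[THEN conjunct2, THEN conjunct2, THEN conjunct2, THEN conjunct2, THEN conjunct2, THEN conjunct2, THEN conjunct2]
lemma br_G: "x \<in> G g \<Longrightarrow> y \<in> G h \<Longrightarrow> br x y \<in> G (g + h)" by (rule HD7[THEN conjunct1, rule_format])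
lemma phi_G: "x \<in> G g \<Longrightarrow> phi x \<in> G g" by (rule HD7[THEN conjunct2, THEN conjunct1, rule_format])
lemma phi_br: "phi (br x y) = br (phi x) (phi y)" by (rule HD7[THEN conjunct2, THEN conjunct2, THEN conjunct1, rule_format])
lemma skew: "x \<in> G g \<Longrightarrow> y \<in> G h \<Longrightarrow> br x y = - sm (eps g h) (br y x)"
  by (rule HD7[THEN conjunct2, THEN conjunct2, THEN conjunct2, THEN conjunct1, rule_format])
lemma jac: "x \<in> G g \<Longrightarrow> y \<in> G h \<Longrightarrow> z \<in> G k \<Longrightarrow>
        sm (eps k g) (br (phi x) (br y z)) + sm (eps g h) (br (phi y) (br z x))
        + sm (eps h k) (br (phi z) (br x y)) = 0"
  by (rule HD7[THEN conjunct2, THEN conjunct2, THEN conjunct2, THEN conjunct2, rule_format])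

lemma eps_nz: "eps a b \<noteq> 0" using bich unfolding bicharacter_def by auto
lemma eps_inv: "eps a b * eps b a = 1" using bich unfolding bicharacter_def by auto
lemma eps_r0: "eps a 0 = 1"
proof -
  have "eps a (0 + 0) = eps a 0 * eps a 0" using bich unfolding bicharacter_def by blast
  then show ?thesis using eps_nz[of a 0] by simp
qed
lemma eps_l0: "eps 0 a = 1"
proof -
  have "eps (0 + 0) a = eps 0 a * eps 0 a" using bich unfolding bicharacter_def by blast
  then show ?thesis using eps_nz[of 0 a] by simp
qed

lemma br_0l[simp]: "br 0 y = 0"
  using br_addl[of 0 0 y] by simp
lemma br_0r[simp]: "br x 0 = 0"
  using br_addr[of x 0 0] by simp
lemma br_negl: "br (- x) y = - br x y"
  using br_addl[of x "-x" y] by (simp add: eq_neg_iff_add_eq_0 add.commute)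
lemma br_negr: "br x (- y) = - br x y"
  using br_addr[of x y "-y"] by (simp add: eq_neg_iff_add_eq_0 add.commute)
lemma br_diffl: "br (x - y) z = br x z - br y z"
  using br_addl[of x "-y" z] br_negl by simp
lemma br_diffr: "br x (y - z) = br x y - br x z"
  using br_addr[of x y "-z"] br_negr by simp
lemma br_suml: "br (sum f A) y = (\<Sum>a\<in>A. br (f a) y)"
  by (induction A rule: infinite_finite_induct) (auto simp: br_addl)
lemma br_sumr: "br y (sum f A) = (\<Sum>a\<in>A. br y (f a))"
  by (induction A rule: infinite_finite_induct) (auto simp: br_addr)

lemma phi_add: "phi (x + y) = phi x + phi y" by (rule lin.add)
lemma phi_sc: "phi (sm c x) = sm c (phi x)" by (rule lin.scale)
lemma phi_0[simp]: "phi 0 = 0" by (rule lin.zero)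
lemma phi_sum: "phi (sum f A) = (\<Sum>a\<in>A. phi (f a))" by (rule lin.sum)

lemma inj_phi: "inj phi" using bij bij_is_inj by auto
lemma phi_inv[simp]: "phi (inv phi x) = x" using bij by (simp add: bij_is_surj surj_f_inv_f)
lemma inv_phi[simp]: "inv phi (phi x) = x" using inj_phi by simp
lemma iphi_add: "inv phi (x + y) = inv phi x + inv phi y"
  by (rule injD[OF inj_phi]) (simp add: phi_add)
lemma iphi_sc: "inv phi (sm c x) = sm c (inv phi x)"
  by (rule injD[OF inj_phi]) (simp add: phi_sc)
lemma iphi_0[simp]: "inv phi 0 = 0"
  by (rule injD[OF inj_phi]) simp
lemma phi_eq0: "phi x = 0 \<longleftrightarrow> x = 0"
  using inj_phi[THEN injD, of x 0] by auto


abbreviation "supp v \<equiv> {g. cmp G v g \<noteq> 0}"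

lemma cmp_all: "finite (supp v) \<and> (\<forall>g. cmp G v g \<in> G g) \<and> v = sum (cmp G v) (supp v)"
  unfolding cmp_def by (rule theI'[OF decomp])

lemma cmp_fin: "finite (supp v)" using cmp_all by blast
lemma cmp_G: "cmp G v g \<in> G g" using cmp_all by blast
lemma cmp_sum: "v = sum (cmp G v) (supp v)" using cmp_all by blast

lemma cmp_unique:
  assumes "finite S" "\<And>g. c g \<in> G g" "\<And>g. g \<notin> S \<Longrightarrow> c g = 0" "v = sum c S"
  shows "cmp G v = c"
proof -
  have sub: "{g. c g \<noteq> 0} \<subseteq> S" using assms(3) by blast
  have fin: "finite {g. c g \<noteq> 0}" using finite_subset[OF sub assms(1)] .
  have "sum c S = sum c {g. c g \<noteq> 0}"
    by (rule sum.mono_neutral_right[OF assms(1) sub]) auto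
  then have "finite {g. c g \<noteq> 0} \<and> (\<forall>g. c g \<in> G g) \<and> v = sum c {g. c g \<noteq> 0}"
    using fin assms(2,4) by (metis (no_types))
  then show ?thesis unfolding cmp_def by (rule the1_equality[OF decomp])
qed

lemma cmp_sum_S: "finite S \<Longrightarrow> supp v \<subseteq> S \<Longrightarrow> v = sum (cmp G v) S"
proof -
  assume a: "finite S" "supp v \<subseteq> S"
  have "sum (cmp G v) S = sum (cmp G v) (supp v)"
    by (rule sum.mono_neutral_right[OF a]) blast
  then show ?thesis using cmp_sum[of v] by simp
qed

lemma graded_eq:
  assumes "finite S" "\<And>g. c g \<in> G g" "\<And>g. g \<notin> S \<Longrightarrow> c g = 0"
    "\<And>g. d g \<in> G g" "\<And>g. g \<notin> S \<Longrightarrow> d g = 0" "sum c S = sum d S"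
  shows "c = d"
proof -
  have "c = cmp G (sum c S)" using cmp_unique[OF assms(1,2,3) refl] by (rule sym)
  also have "\<dots> = cmp G (sum d S)" using assms(6) by (rule arg_cong)
  also have "\<dots> = d" using cmp_unique[OF assms(1,4,5) refl] .
  finally show ?thesis .
qed

lemma G_sum: "finite A \<Longrightarrow> (\<And>a. a \<in> A \<Longrightarrow> f a \<in> G g) \<Longrightarrow> sum f A \<in> G g"
  using subspace_sum[OF Gsub] by blast

lemma H_sub: "subspace H"
  using maxab unfolding max_abelian_subalgebra_def abelian_subalgebra_def subalgebra_def graded_subspace_def
  by blast
lemma H_ab: "x \<in> H \<Longrightarrow> y \<in> H \<Longrightarrow> br x y = 0"
  using maxab unfolding max_abelian_subalgebra_def abelian_subalgebra_def by blast
lemma phi_H: "phi ` H = H"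
  using maxab unfolding max_abelian_subalgebra_def abelian_subalgebra_def subalgebra_def by blast

abbreviation "Z \<equiv> H0 G H"

lemma iphi_H: "x \<in> H \<Longrightarrow> inv phi x \<in> H"
  using phi_H by (metis image_iff inv_phi)
lemma phi_H': "x \<in> H \<Longrightarrow> phi x \<in> H"
  using phi_H by blast

lemma iphi_G: assumes "x \<in> G g" shows "inv phi x \<in> G g"
proof -
  define y where "y = inv phi x"
  define c where "c = (\<lambda>k. phi (cmp G y k))"
  define d where "d = (\<lambda>k. if k = g then x else 0)"
  define S where "S = insert g (supp y)"
  have fS: "finite S" using cmp_fin S_def by simp
  have "sum c S = phi (sum (cmp G y) S)" unfolding c_def by (simp add: phi_sum)
  also have "supp y \<subseteq> S" unfolding S_def by blast
  then have "sum (cmp G y) S = y" using cmp_sum_S[OF fS] by metis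
  then have "phi (sum (cmp G y) S) = x" using y_def by simp
  finally have 1: "sum c S = x" .
  have 2: "sum d S = x" unfolding d_def S_def using fS S_def by (simp add: sum.delta)
  have "c = d"
    apply (rule graded_eq[OF fS])
    using 1 2 by (auto simp: c_def d_def S_def phi_G cmp_G assms Gsub subspace_0)
  then have "\<And>k. k \<noteq> g \<Longrightarrow> cmp G y k = 0"
    unfolding c_def d_def by (metis phi_eq0)
  then have "y = sum (cmp G y) {g}" using cmp_sum_S[of "{g}" y] by auto
  then have "y = cmp G y g" by simp
  then show ?thesis using cmp_G[of y g] y_def by metis
qed

lemma phi_Z: "h \<in> Z \<Longrightarrow> phi h \<in> Z" unfolding H0_def using phi_H' phi_G by blast
lemma iphi_Z: "h \<in> Z \<Longrightarrow> inv phi h \<in> Z" unfolding H0_def using iphi_H iphi_G by blast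

lemma br_sum2: "br (sum f A) (sum g B) = (\<Sum>a\<in>A. \<Sum>b\<in>B. br (f a) (g b))"
  by (simp only: br_suml, simp only: br_sumr)

lemma J0h:
  assumes h0: "h0 \<in> G 0" and x: "x \<in> G g" and y: "y \<in> G k"
  shows "br (phi h0) (br x y) = br (phi x) (br h0 y) + br (br h0 x) (phi y)"
proof -
  have hx: "br h0 x \<in> G g" using br_G[OF h0 x] by simp
  have 1: "br y h0 = - br h0 y" using skew[OF y h0] eps_r0 by simp
  have 2: "br (phi y) (br h0 x) = - sm (eps k g) (br (br h0 x) (phi y))"
    using skew[OF phi_G[OF y] hx] .
  have J: "sm (eps k 0) (br (phi h0) (br x y)) + sm (eps 0 g) (br (phi x) (br y h0))
        + sm (eps g k) (br (phi y) (br h0 x)) = 0" using jac[OF h0 x y] .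
  have "sm (eps g k) (br (phi y) (br h0 x)) = - br (br h0 x) (phi y)"
    unfolding 2 by (simp add: scale_minus_right eps_inv)
  then have "br (phi h0) (br x y) - br (phi x) (br h0 y) - br (br h0 x) (phi y) = 0"
    using J unfolding 1 by (simp add: eps_r0 eps_l0 br_negr)
  then show ?thesis by (simp add: algebra_simps)
qed

lemma e1: "br (phi (sum f A)) (br h0 (sum g B)) = (\<Sum>a\<in>A. \<Sum>b\<in>B. br (phi (f a)) (br h0 (g b)))"
  by (simp only: phi_sum br_sumr[of h0], simp only: br_sum2)
lemma e2: "br (br h0 (sum f A)) (phi (sum g B)) = (\<Sum>a\<in>A. \<Sum>b\<in>B. br (br h0 (f a)) (phi (g b)))"
  by (simp only: phi_sum br_sumr[of h0], simp only: br_sum2)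

lemma J0:
  assumes h0: "h0 \<in> G 0"
  shows "br (phi h0) (br x y) = br (phi x) (br h0 y) + br (br h0 x) (phi y)"
proof -
  define cx where "cx = cmp G x"
  define cy where "cy = cmp G y"
  define Sx where "Sx = supp x"
  define Sy where "Sy = supp y"
  have xe: "x = sum cx Sx" unfolding cx_def Sx_def by (rule cmp_sum)
  have ye: "y = sum cy Sy" unfolding cy_def Sy_def by (rule cmp_sum)
  have r1: "br (phi x) (br h0 y) = (\<Sum>a\<in>Sx. \<Sum>b\<in>Sy. br (phi (cx a)) (br h0 (cy b)))"
    by (subst xe, subst ye, rule e1)
  have r2: "br (br h0 x) (phi y) = (\<Sum>a\<in>Sx. \<Sum>b\<in>Sy. br (br h0 (cx a)) (phi (cy b)))"
    by (subst xe, subst ye, rule e2)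
  have "br (phi h0) (br x y) = (\<Sum>a\<in>Sx. \<Sum>b\<in>Sy. br (phi h0) (br (cx a) (cy b)))"
    by (subst xe, subst ye) (simp only: br_sum2, simp only: br_sumr)
  also have "\<dots> = (\<Sum>a\<in>Sx. \<Sum>b\<in>Sy. br (phi (cx a)) (br h0 (cy b)) + br (br h0 (cx a)) (phi (cy b)))"
    unfolding cx_def cy_def by (intro sum.cong refl J0h[OF h0 cmp_G cmp_G])
  also have "\<dots> = br (phi x) (br h0 y) + br (br h0 x) (phi y)"
    by (simp only: sum.distrib r1 r2)
  finally show ?thesis .
qed


abbreviation "R \<equiv> root_space sm G br phi H"
abbreviation "\<Lambda> \<equiv> roots sm G br phi H"
abbreviation "s \<equiv> shift phi Z"
definition ush :: "('v \<Rightarrow> 'k) \<Rightarrow> 'v \<Rightarrow> 'k" where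
  "ush a = (\<lambda>h. if h \<in> Z then a (phi h) else 0)"

lemma R_iff: "x \<in> R a \<longleftrightarrow> (\<forall>h\<in>Z. br h x = sm (a h) (phi x))"
  unfolding root_space_def by simp

lemma R_sub: "subspace (R a)"
  unfolding subspace_def
  by (auto simp: R_iff br_addr br_scr phi_add phi_sc scale_right_distrib mult.commute)

lemma R_0: "0 \<in> R a" using subspace_0[OF R_sub] .

lemma funpow_Z: "h \<in> Z \<Longrightarrow> (inv phi ^^ n) h \<in> Z"
  by (induction n) (auto simp: iphi_Z)

lemma s_in: "h \<in> Z \<Longrightarrow> s a n h = a ((inv phi ^^ n) h)"
  unfolding shift_def by simp
lemma s_out: "h \<notin> Z \<Longrightarrow> s a n h = 0"
  unfolding shift_def by simp

lemma s_s: "s (s a n) m = s a (n + m)"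
proof
  fix h show "s (s a n) m h = s a (n + m) h"
    by (cases "h \<in> Z") (simp_all add: s_in s_out funpow_Z funpow_add)
qed

lemma s0: "(\<And>h. h \<notin> Z \<Longrightarrow> a h = 0) \<Longrightarrow> s a 0 = a"
  unfolding shift_def by auto

lemma s_fadd: "s (fadd a b) n = fadd (s a n) (s b n)"
  unfolding shift_def fadd_def by auto
lemma s_neg: "s (neg_form a) n = neg_form (s a n)"
  unfolding shift_def neg_form_def by auto

lemma s1_in: "h \<in> Z \<Longrightarrow> s a 1 h = a (inv phi h)"
  by (simp add: s_in)
lemma s1_in': "h \<in> Z \<Longrightarrow> s a (Suc 0) h = a (inv phi h)"
  by (simp add: s_in)

lemma R_br: assumes x: "x \<in> R a" and y: "y \<in> R b"
  shows "br x y \<in> R (fadd (s a 1) (s b 1))"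
  unfolding R_iff
proof
  fix h assume h: "h \<in> Z"
  define h0 where "h0 = inv phi h"
  have h0Z: "h0 \<in> Z" using iphi_Z[OF h] h0_def by simp
  have hh: "h = phi h0" using h0_def by simp
  have h0G: "h0 \<in> G 0" using h0Z unfolding H0_def by blast
  have "br h (br x y) = br (phi x) (br h0 y) + br (br h0 x) (phi y)"
    unfolding hh by (rule J0[OF h0G])
  also have "\<dots> = br (phi x) (sm (b h0) (phi y)) + br (sm (a h0) (phi x)) (phi y)"
    using x y h0Z unfolding R_iff by simp
  also have "\<dots> = sm (a h0 + b h0) (phi (br x y))"
    by (simp add: br_scl br_scr phi_br scale_left_distrib add.commute)
  also have "a h0 + b h0 = fadd (s a 1) (s b 1) h"
    unfolding fadd_def using h h0_def by (simp add: s1_in s1_in')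
  finally show "br h (br x y) = sm (fadd (s a 1) (s b 1) h) (phi (br x y))" .
qed

lemma H_R0: "x \<in> H \<Longrightarrow> x \<in> R (\<lambda>_. 0)"
  unfolding R_iff H0_def using H_ab by auto

lemma phi_R: assumes x: "x \<in> R a" shows "phi x \<in> R (s a 1)"
  unfolding R_iff
proof
  fix h assume h: "h \<in> Z"
  have "br h (phi x) = phi (br (inv phi h) x)" by (simp add: phi_br)
  also have "\<dots> = sm (a (inv phi h)) (phi (phi x))"
    using x iphi_Z[OF h] unfolding R_iff by (simp add: phi_sc)
  finally show "br h (phi x) = sm (s a 1 h) (phi (phi x))" using h by (simp add: s1_in s1_in')
qed

lemma iphi_R: assumes x: "x \<in> R a" shows "inv phi x \<in> R (ush a)"
  unfolding R_iff
proof
  fix h assume h: "h \<in> Z"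
  have "phi (br h (inv phi x)) = br (phi h) x" by (simp add: phi_br)
  also have "\<dots> = sm (a (phi h)) (phi x)" using x phi_Z[OF h] unfolding R_iff by simp
  finally have "br h (inv phi x) = inv phi (sm (a (phi h)) (phi x))" by (metis inv_phi)
  then show "br h (inv phi x) = sm (ush a h) (phi (inv phi x))" using h by (simp add: iphi_sc ush_def)
qed

lemma s_ush: "(\<And>h. h \<notin> Z \<Longrightarrow> a h = 0) \<Longrightarrow> s (ush a) 1 = a"
proof
  fix h assume a: "\<And>h. h \<notin> Z \<Longrightarrow> a h = 0"
  show "s (ush a) 1 h = a h"
    by (cases "h \<in> Z") (simp_all add: s1_in s1_in' s_out a ush_def iphi_Z)
qed

lemma ush_s: "(\<And>h. h \<notin> Z \<Longrightarrow> a h = 0) \<Longrightarrow> ush (s a 1) = a"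
proof
  fix h assume a: "\<And>h. h \<notin> Z \<Longrightarrow> a h = 0"
  show "ush (s a 1) h = a h"
    by (cases "h \<in> Z") (simp_all add: s1_in s1_in' a ush_def phi_Z)
qed

lemma R_cmp: assumes x: "x \<in> R a" shows "cmp G x g \<in> R a"
  unfolding R_iff
proof
  fix h assume h: "h \<in> Z"
  have hG: "h \<in> G 0" using h unfolding H0_def by blast
  define c where "c = (\<lambda>g. br h (cmp G x g))"
  define d where "d = (\<lambda>g. sm (a h) (phi (cmp G x g)))"
  have fS: "finite (supp x)" by (rule cmp_fin)
  have "sum c (supp x) = br h x" unfolding c_def using cmp_sum[of x] by (metis br_sumr)
  moreover have "sum d (supp x) = sm (a h) (phi x)" unfolding d_def
    using cmp_sum[of x] by (metis scale_sum_right phi_sum)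
  moreover have "br h x = sm (a h) (phi x)" using x h unfolding R_iff by blast
  ultimately have "c = d"
    apply (intro graded_eq[OF fS])
    using br_G[OF hG cmp_G] phi_G[OF cmp_G] subspace_scale[OF Gsub]
    by (auto simp: c_def d_def)
  then show "br h (cmp G x g) = sm (a h) (phi (cmp G x g))" unfolding c_def d_def by metis
qed


lemma Z_sub: "subspace Z" unfolding H0_def by (rule subspace_inter[OF H_sub Gsub])
lemma Z_add: "x \<in> Z \<Longrightarrow> y \<in> Z \<Longrightarrow> x + y \<in> Z" using subspace_add[OF Z_sub] .
lemma Z_sc: "x \<in> Z \<Longrightarrow> sm c x \<in> Z" using subspace_scale[OF Z_sub] .

lemma dual_out: "a \<in> H0dual sm G H \<Longrightarrow> h \<notin> Z \<Longrightarrow> a h = 0"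
  unfolding H0dual_def by blast
lemma dual_add: "a \<in> H0dual sm G H \<Longrightarrow> x \<in> Z \<Longrightarrow> y \<in> Z \<Longrightarrow> a (x + y) = a x + a y"
  unfolding H0dual_def by blast
lemma dual_sc: "a \<in> H0dual sm G H \<Longrightarrow> x \<in> Z \<Longrightarrow> a (sm c x) = c * a x"
  unfolding H0dual_def by blast
lemma dualI: "(\<And>x y. x \<in> Z \<Longrightarrow> y \<in> Z \<Longrightarrow> a (x + y) = a x + a y) \<Longrightarrow>
   (\<And>c x. x \<in> Z \<Longrightarrow> a (sm c x) = c * a x) \<Longrightarrow> (\<And>x. x \<notin> Z \<Longrightarrow> a x = 0) \<Longrightarrow> a \<in> H0dual sm G H"
  unfolding H0dual_def by blast

lemma s1_dual: assumes a: "a \<in> H0dual sm G H" shows "s a 1 \<in> H0dual sm G H"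
proof (rule dualI)
  fix x y assume "x \<in> Z" "y \<in> Z"
  then show "s a 1 (x + y) = s a 1 x + s a 1 y"
    by (simp add: s1_in s1_in' Z_add iphi_add dual_add[OF a] iphi_Z)
next
  fix c x assume "x \<in> Z"
  then show "s a 1 (sm c x) = c * s a 1 x"
    by (simp add: s1_in s1_in' Z_sc iphi_sc dual_sc[OF a] iphi_Z)
qed (simp add: s_out)

lemma s_dual: "a \<in> H0dual sm G H \<Longrightarrow> s a n \<in> H0dual sm G H"
proof (induction n)
  case 0 then show ?case using s0[of a] dual_out by auto
next
  case (Suc n)
  have "s a (Suc n) = s (s a n) 1" using s_s[of a n 1] by simp
  then show ?case using s1_dual[OF Suc.IH[OF Suc.prems]] by simp
qed

lemma ush_dual: assumes a: "a \<in> H0dual sm G H" shows "ush a \<in> H0dual sm G H"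
proof (rule dualI)
  fix x y assume "x \<in> Z" "y \<in> Z"
  then show "ush a (x + y) = ush a x + ush a y"
    by (simp add: ush_def Z_add phi_add dual_add[OF a] phi_Z)
next
  fix c x assume "x \<in> Z"
  then show "ush a (sm c x) = c * ush a x"
    by (simp add: ush_def Z_sc phi_sc dual_sc[OF a] phi_Z)
qed (simp add: ush_def)

lemma fadd_dual: "a \<in> H0dual sm G H \<Longrightarrow> b \<in> H0dual sm G H \<Longrightarrow> fadd a b \<in> H0dual sm G H"
  unfolding H0dual_def fadd_def by (auto simp: algebra_simps)
lemma neg_dual: "a \<in> H0dual sm G H \<Longrightarrow> neg_form a \<in> H0dual sm G H"
  unfolding H0dual_def neg_form_def by auto

lemma root_dual: "a \<in> \<Lambda> \<Longrightarrow> a \<in> H0dual sm G H" unfolding roots_def by blast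
lemma root_nz: "a \<in> \<Lambda> \<Longrightarrow> a \<noteq> (\<lambda>_. 0)" unfolding roots_def by blast
lemma root_R: "a \<in> \<Lambda> \<Longrightarrow> \<exists>x. x \<in> R a \<and> x \<noteq> 0"
  unfolding roots_def using R_0 by blast
lemma root_out: "a \<in> \<Lambda> \<Longrightarrow> h \<notin> Z \<Longrightarrow> a h = 0" using root_dual dual_out by blast
lemma rootI: "a \<in> H0dual sm G H \<Longrightarrow> a \<noteq> (\<lambda>_. 0) \<Longrightarrow> x \<in> R a \<Longrightarrow> x \<noteq> 0 \<Longrightarrow> a \<in> \<Lambda>"
  unfolding roots_def by blast

lemma s1_root: assumes a: "a \<in> \<Lambda>" shows "s a 1 \<in> \<Lambda>"
proof -
  obtain x where x: "x \<in> R a" "x \<noteq> 0" using root_R[OF a] by blast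
  show ?thesis
proof (rule rootI)
  show "s a 1 \<in> H0dual sm G H" by (rule s1_dual[OF root_dual[OF a]])
  obtain h where h: "a h \<noteq> 0" using root_nz[OF a] by fastforce
  then have hZ: "h \<in> Z" using root_out[OF a] by blast
  have "s a 1 (phi h) = a h" using phi_Z[OF hZ] by (simp add: s1_in s1_in')
  then show "s a 1 \<noteq> (\<lambda>_. 0)" using h by force
  show "phi x \<in> R (s a 1)" by (rule phi_R[OF x(1)])
  show "phi x \<noteq> 0" using x(2) phi_eq0 by simp
qed
qed

lemma s_root: "a \<in> \<Lambda> \<Longrightarrow> s a n \<in> \<Lambda>"
proof (induction n)
  case 0 then show ?case using s0[of a] root_out by auto
next
  case (Suc n)
  have "s a (Suc n) = s (s a n) 1" using s_s[of a n 1] by simp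
  then show ?case using s1_root[OF Suc.IH[OF Suc.prems]] by simp
qed

lemma ush_root: assumes a: "a \<in> \<Lambda>" shows "ush a \<in> \<Lambda>"
proof -
  obtain x where x: "x \<in> R a" "x \<noteq> 0" using root_R[OF a] by blast
  show ?thesis
proof (rule rootI)
  show "ush a \<in> H0dual sm G H" by (rule ush_dual[OF root_dual[OF a]])
  obtain h where h: "a h \<noteq> 0" using root_nz[OF a] by fastforce
  then have hZ: "h \<in> Z" using root_out[OF a] by blast
  have "ush a (inv phi h) = a h" using iphi_Z[OF hZ] by (simp add: ush_def)
  then show "ush a \<noteq> (\<lambda>_. 0)" using h by force
  show "inv phi x \<in> R (ush a)" by (rule iphi_R[OF x(1)])
  show "inv phi x \<noteq> 0" using x(2) by (metis phi_inv phi_0)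
qed
qed

lemma neg_root: "a \<in> \<Lambda> \<Longrightarrow> neg_form a \<in> \<Lambda>"
  using symm unfolding symmetric_roots_def by blast

lemma neg_neg: "neg_form (neg_form a) = a" unfolding neg_form_def by simp


lemma fadd_app: "fadd a b h = a h + b h" unfolding fadd_def by simp
lemma neg_app: "neg_form a h = - a h" unfolding neg_form_def by simp

definition T :: "(nat \<Rightarrow> 'v \<Rightarrow> 'k) \<Rightarrow> nat \<Rightarrow> 'v \<Rightarrow> 'k" where
  "T a i = (if i = 0 then a 1 else conn_sum phi Z a i)"

lemma s_iphi: "h \<in> Z \<Longrightarrow> s a m (inv phi h) = s a (Suc m) h"
  by (simp add: s_in iphi_Z funpow_swap1)

lemma conn_rec: "conn_sum phi Z a (Suc i) = fadd (s (T a i) 1) (s (a (Suc (Suc i))) 1)"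
proof
  fix h
  show "conn_sum phi Z a (Suc i) h = fadd (s (T a i) 1) (s (a (Suc (Suc i))) 1) h"
  proof (cases "h \<in> Z")
    case False then show ?thesis
      by (simp add: conn_sum_def fadd_app s_out)
  next
    case hZ: True
    show ?thesis
    proof (cases i)
      case 0 then show ?thesis by (simp add: conn_sum_def fadd_app T_def)
    next
      case (Suc i')
      have e1: "{2..Suc i + 1} = insert (Suc (Suc i)) {2..i+1}" using Suc by auto
      have "s (T a i) 1 h = conn_sum phi Z a i (inv phi h)" using Suc hZ by (simp add: T_def s1_in s1_in')
      also have "\<dots> = s (a 1) (Suc i) h + (\<Sum>j\<in>{2..i + 1}. s (a j) (Suc (i + 2 - j)) h)"
        unfolding conn_sum_def using hZ by (simp add: s_iphi)
      also have "(\<Sum>j\<in>{2..i + 1}. s (a j) (Suc (i + 2 - j)) h) = (\<Sum>j\<in>{2..i + 1}. s (a j) (Suc i + 2 - j) h)"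
        by (rule sum.cong) (auto simp: Suc_diff_le)
      finally have A: "s (T a i) 1 h = s (a 1) (Suc i) h + (\<Sum>j\<in>{2..i + 1}. s (a j) (Suc i + 2 - j) h)" .
      have "conn_sum phi Z a (Suc i) h = s (a 1) (Suc i) h + (\<Sum>j\<in>{2..Suc i + 1}. s (a j) (Suc i + 2 - j) h)"
        unfolding conn_sum_def by simp
      also have "\<dots> = s (a 1) (Suc i) h + (s (a (Suc (Suc i))) 1 h + (\<Sum>j\<in>{2..i + 1}. s (a j) (Suc i + 2 - j) h))"
        unfolding e1 by (simp add: sum.insert)
      finally show ?thesis using A by (simp add: fadd_app algebra_simps)
    qed
  qed
qed

lemma T_dep: "(\<And>j. 1 \<le> j \<Longrightarrow> j \<le> Suc i \<Longrightarrow> a j = b j) \<Longrightarrow> T a i = T b i"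
  unfolding T_def conn_sum_def by (auto intro!: sum.cong)

lemma T_suc: "T a (Suc i) = fadd (s (T a i) 1) (s (a (Suc (Suc i))) 1)"
  using conn_rec[of a i] unfolding T_def by simp

inductive chain :: "('v \<Rightarrow> 'k) \<Rightarrow> ('v \<Rightarrow> 'k) \<Rightarrow> bool" for al where
  base: "s al n \<in> \<Lambda> \<Longrightarrow> chain al (s al n)"
| step: "chain al S \<Longrightarrow> S \<in> \<Lambda> \<Longrightarrow> c \<in> \<Lambda> \<Longrightarrow> chain al (fadd (s S 1) (s c 1))"

definition "PMs b = {s b m | m. True} \<union> {s (neg_form b) m | m. True}"

lemma seq_chain:
  "k \<ge> 1 \<Longrightarrow> (\<forall>j\<in>{1..k}. a j \<in> \<Lambda>) \<Longrightarrow> a 1 = s al n \<Longrightarrow> (\<forall>i<k-1. T a i \<in> \<Lambda>)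
   \<Longrightarrow> chain al (T a (k - 1))"
proof (induction k rule: nat_induct_at_least)
  case base then show ?case using chain.base[of al n] by (simp add: T_def)
next
  case (Suc k)
  have c1: "chain al (T a (k - 1))" using Suc by auto
  have c2: "T a (k - 1) \<in> \<Lambda>" using Suc by auto
  have c3: "a (Suc k) \<in> \<Lambda>" using Suc by auto
  have "T a (Suc k - 1) = fadd (s (T a (k - 1)) 1) (s (a (Suc k)) 1)"
    using T_suc[of a "k - 1"] Suc(1) by simp
  then show ?case using chain.step[OF c1 c2 c3] by simp
qed

lemma chain_seq: "chain al S \<Longrightarrow> \<exists>k a n. k \<ge> 1 \<and> (\<forall>j\<in>{1..k}. a j \<in> \<Lambda>) \<and> a 1 = s al n \<and>
   (\<forall>i<k-1. T a i \<in> \<Lambda>) \<and> S = T a (k - 1)"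
proof (induction rule: chain.induct)
  case (base n)
  show ?case by (rule exI[of _ 1], rule exI[of _ "\<lambda>_. s al n"], rule exI[of _ n]) (simp add: base T_def)
next
  case (step S c)
  then obtain k a n where k: "k \<ge> 1" "\<forall>j\<in>{1..k}. a j \<in> \<Lambda>" "a 1 = s al n"
    "\<forall>i<k-1. T a i \<in> \<Lambda>" "S = T a (k - 1)" by blast
  define a' where "a' = a(Suc k := c)"
  have dep: "\<And>i. i \<le> k - 1 \<Longrightarrow> T a' i = T a i"
    by (rule T_dep) (use k(1) in \<open>auto simp: a'_def\<close>)
  have "T a' (Suc k - 1) = fadd (s (T a' (k - 1)) 1) (s (a' (Suc k)) 1)"
    using T_suc[of a' "k - 1"] k(1) by simp
  also have "\<dots> = fadd (s S 1) (s c 1)" using dep[of "k - 1"] k(5) by (simp add: a'_def)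
  finally have E: "fadd (s S 1) (s c 1) = T a' (Suc k - 1)" by simp
  show ?case
  proof (intro exI conjI)
    show "Suc k \<ge> 1" by simp
    show "\<forall>j\<in>{1..Suc k}. a' j \<in> \<Lambda>" using k(2) \<open>c \<in> \<Lambda>\<close> by (auto simp: a'_def)
    show "a' 1 = s al n" using k(1,3) by (simp add: a'_def)
    show "\<forall>i<Suc k - 1. T a' i \<in> \<Lambda>"
    proof (intro allI impI)
      fix i assume "i < Suc k - 1"
      then have "i \<le> k - 1" by simp
      then show "T a' i \<in> \<Lambda>" using dep k(4,5) \<open>S \<in> \<Lambda>\<close>
        by (cases "i = k - 1") auto
    qed
  qed (rule E)
qed

lemma conn_iff: "connected sm G br phi H al be \<longleftrightarrow> (\<exists>S. chain al S \<and> S \<in> PMs be)"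
proof
  assume "connected sm G br phi H al be"
  then obtain k a where k: "k \<ge> 1" "\<forall>j\<in>{1..k}. a j \<in> \<Lambda>" "a 1 \<in> {s al n | n. True}"
    "if k = 1 then a 1 \<in> PMs be
     else (\<forall>i\<in>{1..k-2}. conn_sum phi Z a i \<in> \<Lambda>) \<and> conn_sum phi Z a (k - 1) \<in> PMs be"
    unfolding connected_def Let_def PMs_def by blast
  obtain n where n: "a 1 = s al n" using k(3) by blast
  have A: "\<forall>i<k-1. T a i \<in> \<Lambda>"
  proof (intro allI impI)
    fix i assume i: "i < k - 1"
    show "T a i \<in> \<Lambda>"
    proof (cases "i = 0")
      case True then show ?thesis using k(1,2) by (simp add: T_def)
    next
      case False then show ?thesis using k(4) i by (simp add: T_def split: if_splits)
    qed
  qed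
  have B: "T a (k - 1) \<in> PMs be" using k(1,4) by (cases "k = 1") (simp_all add: T_def)
  show "\<exists>S. chain al S \<and> S \<in> PMs be" using seq_chain[OF k(1,2) n A] B by blast
next
  assume "\<exists>S. chain al S \<and> S \<in> PMs be"
  then obtain S where S: "chain al S" "S \<in> PMs be" by blast
  obtain k a n where k: "k \<ge> 1" "\<forall>j\<in>{1..k}. a j \<in> \<Lambda>" "a 1 = s al n"
    "\<forall>i<k-1. T a i \<in> \<Lambda>" "S = T a (k - 1)" using chain_seq[OF S(1)] by blast
  have C: "if k = 1 then a 1 \<in> PMs be
     else (\<forall>i\<in>{1..k-2}. conn_sum phi Z a i \<in> \<Lambda>) \<and> conn_sum phi Z a (k - 1) \<in> PMs be"
  proof (cases "k = 1")
    case True then show ?thesis using S(2) k(5) by (simp add: T_def)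
  next
    case False
    have "\<forall>i\<in>{1..k-2}. conn_sum phi Z a i \<in> \<Lambda>"
    proof
      fix i assume "i \<in> {1..k-2}"
      then have "i < k - 1" "i \<noteq> 0" by auto
      then show "conn_sum phi Z a i \<in> \<Lambda>" using k(4) by (metis T_def)
    qed
    moreover have "conn_sum phi Z a (k - 1) \<in> PMs be" using S(2) k(1,5) False by (simp add: T_def)
    ultimately show ?thesis using False by simp
  qed
  show "connected sm G br phi H al be"
    unfolding connected_def Let_def
    apply (rule exI[of _ k], rule conjI[OF k(1)], rule exI[of _ a])
    using k(2,3) C unfolding PMs_def by blast
qed


lemma s_comm: "s (s a n) m = s (s a m) n" by (simp add: s_s add.commute)

lemma chain_shift: "chain al S \<Longrightarrow> chain al (s S d)"
proof (induction rule: chain.induct)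
  case (base n)
  have "s (s al n) d = s al (n + d)" by (rule s_s)
  moreover have "s al (n + d) \<in> \<Lambda>" using s_root[OF base, of d] by (simp only: s_s)
  ultimately show ?case using chain.base[of al "n + d"] by simp
next
  case (step S c)
  have "s (fadd (s S 1) (s c 1)) d = fadd (s (s S d) 1) (s (s c d) 1)"
    by (simp add: s_fadd s_s)
  then show ?case using chain.step[OF step.IH s_root[OF step.hyps(2)] s_root[OF step.hyps(3)]] by simp
qed

lemma neg_fadd: "neg_form (fadd a b) = fadd (neg_form a) (neg_form b)"
  unfolding neg_form_def fadd_def by auto

lemma chain_neg: "chain al S \<Longrightarrow> chain (neg_form al) (neg_form S)"
proof (induction rule: chain.induct)
  case (base n)
  then show ?case using chain.base[of "neg_form al" n] neg_root[OF base] by (simp add: s_neg)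
next
  case (step S c)
  then show ?case using chain.step[OF step.IH neg_root[OF step.hyps(2)] neg_root[OF step.hyps(3)]]
    by (simp add: neg_fadd s_neg)
qed

lemma chain_concat: "chain be TT \<Longrightarrow> chain al (s be d) \<Longrightarrow> chain al (s TT d)"
proof (induction rule: chain.induct)
  case (base n)
  have "s (s be n) d = s (s be d) n" by (rule s_comm)
  then show ?case using chain_shift[OF base.prems, of n] by simp
next
  case (step S c)
  have "s (fadd (s S 1) (s c 1)) d = fadd (s (s S d) 1) (s (s c d) 1)"
    by (simp add: s_fadd s_s)
  then show ?case using chain.step[OF step.IH[OF step.prems] s_root[OF step.hyps(2)] s_root[OF step.hyps(3)]] by simp
qed

lemma conn_trans: assumes "connected sm G br phi H al be" "connected sm G br phi H be ga"
  shows "connected sm G br phi H al ga"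
proof -
  obtain S1 where S1: "chain al S1" "S1 \<in> PMs be" using assms(1) conn_iff by blast
  obtain S2 where S2: "chain be S2" "S2 \<in> PMs ga" using assms(2) conn_iff by blast
  show ?thesis unfolding conn_iff
  proof (cases "\<exists>m. S1 = s be m")
    case True
    then obtain m where m: "S1 = s be m" by blast
    have "chain al (s S2 m)" using chain_concat[OF S2(1)] S1(1) m by simp
    moreover have "s S2 m \<in> PMs ga" using S2(2) unfolding PMs_def by (auto simp: s_s)
    ultimately show "\<exists>S. chain al S \<and> S \<in> PMs ga" by blast
  next
    case False
    then obtain m where m: "S1 = s (neg_form be) m" using S1(2) unfolding PMs_def by blast
    have "chain al (s (neg_form S2) m)" using chain_concat[OF chain_neg[OF S2(1)]] S1(1) m by simp
    moreover have "s (neg_form S2) m \<in> PMs ga" using S2(2) unfolding PMs_def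
      by (auto simp: s_s s_neg neg_neg)
    ultimately show "\<exists>S. chain al S \<and> S \<in> PMs ga" by blast
  qed
qed

lemma root_s0: "a \<in> \<Lambda> \<Longrightarrow> s a 0 = a" using s0 root_out by blast

lemma chain_self: "a \<in> \<Lambda> \<Longrightarrow> chain a a"
  using chain.base[of a 0] root_s0 by simp

lemma conn_refl: "a \<in> \<Lambda> \<Longrightarrow> connected sm G br phi H a a"
  unfolding conn_iff PMs_def using chain_self root_s0 by (metis (mono_tags, lifting) UnI1 mem_Collect_eq)

lemma conn_s1: assumes a: "a \<in> \<Lambda>" shows "connected sm G br phi H (s a 1) a"
proof -
  have "chain (s a 1) (s a 1)" by (rule chain_self[OF s1_root[OF a]])
  moreover have "s a 1 \<in> PMs a" unfolding PMs_def by blast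
  ultimately show ?thesis unfolding conn_iff by blast
qed

lemma conn_ush: assumes a: "a \<in> \<Lambda>" shows "connected sm G br phi H (ush a) a"
proof -
  have e: "s (ush a) 1 = a" using s_ush root_out[OF a] by blast
  have "chain (ush a) (s (ush a) 1)" using chain.base[of "ush a" 1] e a by simp
  moreover have "a \<in> PMs a" unfolding PMs_def using root_s0[OF a] by (metis (mono_tags, lifting) UnI1 mem_Collect_eq)
  ultimately show ?thesis unfolding conn_iff e by blast
qed

lemma conn_step: assumes D: "D \<in> \<Lambda>" and c: "c \<in> \<Lambda>" and E: "fadd (s D 1) (s c 1) \<in> PMs b"
  shows "connected sm G br phi H D b"
  unfolding conn_iff using chain.step[OF chain_self[OF D] D c] E by blast

lemma conn_base: assumes D: "D \<in> \<Lambda>" and E: "D \<in> PMs b"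
  shows "connected sm G br phi H D b"
  unfolding conn_iff using chain_self[OF D] E by blast

lemma conn_c3: assumes b: "b \<in> \<Lambda>" and g: "g \<in> \<Lambda>" and D: "fadd (s b 1) (s g 1) \<in> \<Lambda>"
  shows "connected sm G br phi H (fadd (s b 1) (s g 1)) b"
proof (rule conn_step[OF D neg_root[OF s1_root[OF g]]])
  have "fadd (s (fadd (s b 1) (s g 1)) 1) (s (neg_form (s g 1)) 1) = s b 2"
    by (rule ext) (simp add: fadd_app neg_app s_fadd s_neg s_s numeral_2_eq_2)
  then show "fadd (s (fadd (s b 1) (s g 1)) 1) (s (neg_form (s g 1)) 1) \<in> PMs b"
    unfolding PMs_def by blast
qed

lemma conn_c4: assumes b: "b \<in> \<Lambda>" and g: "g \<in> \<Lambda>" and D: "fadd g (neg_form (s b 1)) \<in> \<Lambda>"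
  shows "connected sm G br phi H (s g 1) b"
proof (rule conn_step[OF s1_root[OF g] neg_root[OF s1_root[OF D]]])
  have "fadd (s (s g 1) 1) (s (neg_form (s (fadd g (neg_form (s b 1))) 1)) 1) = s b 3"
    by (rule ext) (simp add: fadd_app neg_app s_fadd s_neg s_s numeral_3_eq_3)
  then show "fadd (s (s g 1) 1) (s (neg_form (s (fadd g (neg_form (s b 1))) 1)) 1) \<in> PMs b"
    unfolding PMs_def by blast
qed

lemma conn_c5: assumes b: "b \<in> \<Lambda>" and g: "g \<in> \<Lambda>" and D: "fadd g (s b 1) \<in> \<Lambda>"
  shows "connected sm G br phi H (s g 1) b"
proof (rule conn_step[OF s1_root[OF g] neg_root[OF s1_root[OF D]]])
  have "fadd (s (s g 1) 1) (s (neg_form (s (fadd g (s b 1)) 1)) 1) = s (neg_form b) 3"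
    by (rule ext) (simp add: fadd_app neg_app s_fadd s_neg s_s numeral_3_eq_3)
  then show "fadd (s (s g 1) 1) (s (neg_form (s (fadd g (s b 1)) 1)) 1) \<in> PMs b"
    unfolding PMs_def by blast
qed


lemma br_R: "x \<in> R a \<Longrightarrow> h \<in> Z \<Longrightarrow> br h x = sm (a h) (phi x)" unfolding R_iff by blast

lemma direct:
  "finite F \<Longrightarrow> (\<forall>a\<in>F. \<forall>h. h \<notin> Z \<longrightarrow> a h = 0) \<Longrightarrow> (\<forall>a\<in>F. w a \<in> R a) \<Longrightarrow> sum w F = 0
   \<Longrightarrow> (\<forall>a\<in>F. w a = 0)"
proof (induction F arbitrary: w rule: finite_induct)
  case empty then show ?case by simp
next
  case (insert g F)
  have S: "w g + sum w F = 0" using insert by simp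
  have key: "\<forall>a\<in>F. w a = 0"
  proof
    fix a assume aF: "a \<in> F"
    have ag: "a \<noteq> g" using aF insert(2) by blast
    obtain h where h: "a h \<noteq> g h" using ag by (meson ext)
    have hZ: "h \<in> Z" using h insert(4) aF by (metis insertCI)
    have "phi (sm (g h) (w g) + (\<Sum>b\<in>F. sm (b h) (w b))) = br h (w g + sum w F)"
    proof -
      have 1: "br h (w g) = sm (g h) (phi (w g))" using insert(5) hZ br_R by blast
      have 2: "(\<Sum>b\<in>F. br h (w b)) = (\<Sum>b\<in>F. sm (b h) (phi (w b)))"
        using insert(5) hZ br_R by (intro sum.cong) auto
      show ?thesis by (simp add: phi_add phi_sum phi_sc br_addr br_sumr 1 2)
    qed
    also have "\<dots> = 0" using S by simp
    finally have A: "sm (g h) (w g) + (\<Sum>b\<in>F. sm (b h) (w b)) = 0" using phi_eq0 by blast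
    have B: "sm (g h) (w g) + (\<Sum>b\<in>F. sm (g h) (w b)) = 0"
      using arg_cong[OF S, of "sm (g h)"] by (simp add: scale_right_distrib scale_sum_right)
    have C: "(\<Sum>b\<in>F. sm (b h - g h) (w b)) = 0"
      using arg_cong2[OF A B, of "(-)"] by (simp add: scale_left_diff_distrib sum_subtractf)
    have "\<forall>b\<in>F. sm (b h - g h) (w b) = 0"
      by (rule insert.IH[OF _ _ C]) (use insert(4,5) subspace_scale[OF R_sub] in auto)
    then show "w a = 0" using aF h by force
  qed
  then show ?case using S by simp
qed


lemma span_dec: "v \<in> span (\<Union>a\<in>P. R a) \<Longrightarrow>
  \<exists>F w. finite F \<and> F \<subseteq> P \<and> (\<forall>a\<in>F. w a \<in> R a) \<and> v = sum w F"
proof (induction rule: span_induct)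
  case (step x)
  then obtain a where a: "a \<in> P" "x \<in> R a" by blast
  show ?case by (rule exI[of _ "{a}"], rule exI[of _ "\<lambda>_. x"]) (use a in auto)
next
  case base
  show ?case
  proof (rule subspaceI)
    show "0 \<in> Collect (\<lambda>v. \<exists>F w. finite F \<and> F \<subseteq> P \<and> (\<forall>a\<in>F. w a \<in> R a) \<and> v = sum w F)"
      by (auto intro!: exI[of _ "{}"])
  next
    fix x y
    assume "x \<in> Collect (\<lambda>v. \<exists>F w. finite F \<and> F \<subseteq> P \<and> (\<forall>a\<in>F. w a \<in> R a) \<and> v = sum w F)"
       "y \<in> Collect (\<lambda>v. \<exists>F w. finite F \<and> F \<subseteq> P \<and> (\<forall>a\<in>F. w a \<in> R a) \<and> v = sum w F)"
    then obtain F1 w1 F2 w2 where 1: "finite F1" "F1 \<subseteq> P" "\<forall>a\<in>F1. w1 a \<in> R a" "x = sum w1 F1"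
       and 2: "finite F2" "F2 \<subseteq> P" "\<forall>a\<in>F2. w2 a \<in> R a" "y = sum w2 F2" by blast
    define w where "w = (\<lambda>a. (if a \<in> F1 then w1 a else 0) + (if a \<in> F2 then w2 a else 0))"
    have fU: "finite (F1 \<union> F2)" using 1(1) 2(1) by simp
    have s1: "sum (\<lambda>a. if a \<in> F1 then w1 a else 0) (F1 \<union> F2) = sum w1 F1"
    proof -
      have "sum (\<lambda>a. if a \<in> F1 then w1 a else 0) (F1 \<union> F2) = sum (\<lambda>a. if a \<in> F1 then w1 a else 0) F1"
        by (rule sum.mono_neutral_right[OF fU]) auto
      also have "\<dots> = sum w1 F1" by (rule sum.cong) auto
      finally show ?thesis .
    qed
    have s2: "sum (\<lambda>a. if a \<in> F2 then w2 a else 0) (F1 \<union> F2) = sum w2 F2"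
    proof -
      have "sum (\<lambda>a. if a \<in> F2 then w2 a else 0) (F1 \<union> F2) = sum (\<lambda>a. if a \<in> F2 then w2 a else 0) F2"
        by (rule sum.mono_neutral_right[OF fU]) auto
      also have "\<dots> = sum w2 F2" by (rule sum.cong) auto
      finally show ?thesis .
    qed
    have e: "x + y = sum w (F1 \<union> F2)"
      unfolding w_def sum.distrib s1 s2 1(4) 2(4) ..
    have "\<forall>a\<in>F1 \<union> F2. w a \<in> R a"
    proof
      fix a assume "a \<in> F1 \<union> F2"
      have "(if a \<in> F1 then w1 a else 0) \<in> R a" using 1(3) R_0 by simp
      moreover have "(if a \<in> F2 then w2 a else 0) \<in> R a" using 2(3) R_0 by simp
      ultimately show "w a \<in> R a" unfolding w_def by (rule subspace_add[OF R_sub])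
    qed
    then show "x + y \<in> Collect (\<lambda>v. \<exists>F w. finite F \<and> F \<subseteq> P \<and> (\<forall>a\<in>F. w a \<in> R a) \<and> v = sum w F)"
      using fU 1(2) 2(2) e by blast
  next
    fix c x
    assume "x \<in> Collect (\<lambda>v. \<exists>F w. finite F \<and> F \<subseteq> P \<and> (\<forall>a\<in>F. w a \<in> R a) \<and> v = sum w F)"
    then obtain F w where 1: "finite F" "F \<subseteq> P" "\<forall>a\<in>F. w a \<in> R a" "x = sum w F" by blast
    have A: "\<forall>a\<in>F. sm c (w a) \<in> R a" using 1(3) subspace_scale[OF R_sub] by simp
    have B: "sm c x = sum (\<lambda>a. sm c (w a)) F" unfolding 1(4) by (rule scale_sum_right)
    show "sm c x \<in> Collect (\<lambda>v. \<exists>F w. finite F \<and> F \<subseteq> P \<and> (\<forall>a\<in>F. w a \<in> R a) \<and> v = sum w F)"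
      using 1(1,2) A B by (intro CollectI exI[of _ F] exI[of _ "\<lambda>a. sm c (w a)"] conjI)
  qed
qed

lemma direct1:
  assumes "finite F" "\<forall>a\<in>F. \<forall>h. h \<notin> Z \<longrightarrow> a h = 0" "\<forall>a\<in>F. w a \<in> R a"
    "d \<notin> F" "\<forall>h. h \<notin> Z \<longrightarrow> d h = 0" "z \<in> R d" "z + sum w F = 0"
  shows "z = 0"
proof -
  define w' where "w' = w(d := z)"
  have e: "sum w' F = sum w F" unfolding w'_def using assms(4) by (intro sum.cong) auto
  have "sum w' (insert d F) = 0" using assms(1,4,7) e by (simp add: w'_def)
  then have "\<forall>a\<in>insert d F. w' a = 0"
    by (intro direct) (use assms in \<open>auto simp: w'_def\<close>)
  then show ?thesis by (simp add: w'_def)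
qed

lemma split_dec: "\<exists>x F w. x \<in> H \<and> finite F \<and> F \<subseteq> \<Lambda> \<and> (\<forall>a\<in>F. w a \<in> R a) \<and> v = x + sum w F"
proof -
  have "v \<in> span (H \<union> (\<Union>a\<in>\<Lambda>. R a))" using splt unfolding split_hlc_def by blast
  then obtain x y where xy: "x \<in> span H" "y \<in> span (\<Union>a\<in>\<Lambda>. R a)" "v = x + y"
    unfolding span_Un by blast
  have "x \<in> H" using xy(1) H_sub by (metis span_eq_iff)
  then show ?thesis using span_dec[OF xy(2)] xy(3) by blast
qed

lemma R0_H: assumes v: "v \<in> R (\<lambda>_. 0)" shows "v \<in> H"
proof -
  obtain x F w where d: "x \<in> H" "finite F" "F \<subseteq> \<Lambda>" "\<forall>a\<in>F. w a \<in> R a" "v = x + sum w F"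
    using split_dec by blast
  have 1: "x - v \<in> R (\<lambda>_. 0)" using H_R0[OF d(1)] v by (rule subspace_diff[OF R_sub])
  have 2: "(\<lambda>_. 0) \<notin> F"
  proof
    assume "(\<lambda>_. 0) \<in> F"
    then have "(\<lambda>_. 0) \<in> \<Lambda>" by (rule subsetD[OF d(3)])
    then show False using root_nz by metis
  qed
  have 3: "(x - v) + sum w F = 0" unfolding d(5) by (simp add: algebra_simps)
  have 4: "\<forall>a\<in>F. \<forall>h. h \<notin> Z \<longrightarrow> a h = 0" using d(3) root_out by (meson subsetD)
  have "x - v = 0" by (rule direct1[OF d(2) 4 d(4) 2 _ 1 3]) simp
  then have "x = v" by (rule right_minus_eq[THEN iffD1])
  then show ?thesis using d(1) by blast
qed

lemma nzroot: "x \<in> R d \<Longrightarrow> x \<noteq> 0 \<Longrightarrow> d \<in> H0dual sm G H \<Longrightarrow> d = (\<lambda>_. 0) \<or> d \<in> \<Lambda>"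
  using rootI by blast

lemma JVh: assumes u: "u \<in> G a" and w: "w \<in> G b" and y: "y \<in> G c"
  and 1: "br w y = 0" and 2: "br y u = 0"
  shows "br (br u w) (phi y) = 0"
proof -
  have "sm (eps b c) (br (phi y) (br u w)) = 0" using jac[OF u w y] 1 2 by simp
  then have "br (phi y) (br u w) = 0" using eps_nz by simp
  then show ?thesis using skew[OF br_G[OF u w] phi_G[OF y]] by simp
qed

lemma JV: assumes 1: "\<And>a c. br (cmp G w a) (cmp G y c) = 0" and 2: "\<And>a c. br (cmp G y c) (cmp G u a) = 0"
  shows "br (br u w) (phi y) = 0"
proof -
  have "br (br u w) (phi y) = br (br (sum (cmp G u) (supp u)) (sum (cmp G w) (supp w))) (phi (sum (cmp G y) (supp y)))"
    using cmp_sum[of u] cmp_sum[of w] cmp_sum[of y] by simp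
  also have "\<dots> = (\<Sum>a\<in>supp u. \<Sum>c\<in>supp y. \<Sum>b\<in>supp w. br (br (cmp G u a) (cmp G w b)) (phi (cmp G y c)))"
    by (simp only: br_sum2 phi_sum, simp only: br_suml br_sumr)
  also have "\<dots> = 0"
    by (intro sum.neutral ballI JVh[OF cmp_G cmp_G cmp_G 1 2])
  finally show ?thesis .
qed


abbreviation "C \<equiv> root_class sm G br phi H"
abbreviation "gA a \<equiv> (\<Union>b\<in>C a. brackets br (R b) (R (neg_form b)))"
abbreviation "gB a \<equiv> (\<Union>b\<in>C a. R b)"

lemma C_iff: "b \<in> C a \<longleftrightarrow> b \<in> \<Lambda> \<and> connected sm G br phi H b a"
  unfolding root_class_def by simp

lemma C_trans: "b \<in> C a \<Longrightarrow> b' \<in> \<Lambda> \<Longrightarrow> connected sm G br phi H b' b \<Longrightarrow> b' \<in> C a"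
  unfolding C_iff using conn_trans by blast

lemma LC_span: "L_class sm G br phi H a = span (gA a \<union> gB a)"
  unfolding L_class_def H_class_def V_class_def span_Un by simp

lemma fadd_comm: "fadd a b = fadd b a" unfolding fadd_def by (auto simp: add.commute)
lemma s_zero: "s (\<lambda>_. 0) n = (\<lambda>_. 0)" unfolding shift_def by auto
lemma fadd_zero: "fadd (\<lambda>_. 0) a = a" unfolding fadd_def by simp
lemma fadd_neg0: "fadd a (neg_form a) = (\<lambda>_. 0)" unfolding fadd_def neg_form_def by simp
lemma ush_neg: "ush (neg_form a) = neg_form (ush a)" unfolding ush_def neg_form_def by auto

lemma brk_R0: "u \<in> R b \<Longrightarrow> w \<in> R (neg_form b) \<Longrightarrow> br u w \<in> R (\<lambda>_. 0)"
  using R_br[of u b w "neg_form b"] by (simp add: s_neg fadd_neg0)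

lemma gA_H: "x \<in> gA a \<Longrightarrow> x \<in> H"
  unfolding brackets_def using brk_R0 R0_H by blast

lemma gA_R0: "x \<in> gA a \<Longrightarrow> x \<in> R (\<lambda>_. 0)"
  unfolding brackets_def using brk_R0 by blast

lemma C_root: "b \<in> C a \<Longrightarrow> b \<in> \<Lambda>" unfolding C_iff by blast

lemma C_s1: "b \<in> C a \<Longrightarrow> s b 1 \<in> C a"
  using C_trans[OF _ s1_root conn_s1] C_root by blast
lemma C_ush: "b \<in> C a \<Longrightarrow> ush b \<in> C a"
  using C_trans[OF _ ush_root conn_ush] C_root by blast

lemma graded_LC: "graded_subspace sm G (L_class sm G br phi H a)"
proof -
  let ?T = "span (\<Union>g. L_class sm G br phi H a \<inter> G g)"
  have sub: "gA a \<union> gB a \<subseteq> ?T"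
  proof
    fix x assume x: "x \<in> gA a \<union> gB a"
    show "x \<in> ?T"
    proof (cases "x \<in> gB a")
      case True
      then obtain b where b: "b \<in> C a" "x \<in> R b" by blast
      have "x = sum (cmp G x) (supp x)" by (rule cmp_sum)
      moreover have "sum (cmp G x) (supp x) \<in> ?T"
      proof (rule span_sum)
        fix g assume "g \<in> supp x"
        have "cmp G x g \<in> gB a" using b R_cmp by blast
        then have "cmp G x g \<in> L_class sm G br phi H a" unfolding LC_span by (blast intro: span_base)
        then show "cmp G x g \<in> ?T" using cmp_G by (blast intro: span_base)
      qed
      ultimately show ?thesis by simp
    next
      case False
      then obtain b u w where b: "b \<in> C a" "u \<in> R b" "w \<in> R (neg_form b)" "x = br u w"
        using x unfolding brackets_def by blast
      have "x = br (sum (cmp G u) (supp u)) (sum (cmp G w) (supp w))"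
        using b(4) cmp_sum[of u] cmp_sum[of w] by simp
      also have "\<dots> = (\<Sum>c\<in>supp u. \<Sum>d\<in>supp w. br (cmp G u c) (cmp G w d))" by (rule br_sum2)
      also have "\<dots> \<in> ?T"
      proof (intro span_sum)
        fix c d
        have "br (cmp G u c) (cmp G w d) \<in> gA a"
          unfolding brackets_def using b R_cmp by blast
        then have "br (cmp G u c) (cmp G w d) \<in> L_class sm G br phi H a" unfolding LC_span by (blast intro: span_base)
        moreover have "br (cmp G u c) (cmp G w d) \<in> G (c + d)" by (rule br_G[OF cmp_G cmp_G])
        ultimately show "br (cmp G u c) (cmp G w d) \<in> ?T" by (blast intro: span_base)
      qed
      finally show ?thesis .
    qed
  qed
  have "span (gA a \<union> gB a) \<subseteq> ?T"
    by (rule span_minimal[OF sub subspace_span])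
  then have "L_class sm G br phi H a \<subseteq> ?T" by (simp only: LC_span)
  moreover have "subspace (L_class sm G br phi H a)" by (simp only: LC_span subspace_span)
  ultimately show ?thesis unfolding graded_subspace_def by blast
qed

lemma ilin: "Vector_Spaces.linear sm sm (inv phi)"
  unfolding Vector_Spaces.linear_iff using vs iphi_add iphi_sc by blast

sublocale ilin: Vector_Spaces.linear sm sm "inv phi" by (rule ilin)

lemma phi_gen: "phi ` (gA a \<union> gB a) \<subseteq> gA a \<union> gB a"
proof
  fix y assume "y \<in> phi ` (gA a \<union> gB a)"
  then obtain x where x: "x \<in> gA a \<union> gB a" "y = phi x" by blast
  show "y \<in> gA a \<union> gB a"
  proof (cases "x \<in> gB a")
    case True
    then obtain b where b: "b \<in> C a" "x \<in> R b" by blast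
    then show ?thesis using x(2) phi_R[OF b(2)] C_s1[OF b(1)] by blast
  next
    case False
    then obtain b u w where b: "b \<in> C a" "u \<in> R b" "w \<in> R (neg_form b)" "x = br u w"
      using x unfolding brackets_def by blast
    have "phi w \<in> R (neg_form (s b 1))" using phi_R[OF b(3)] by (simp add: s_neg)
    then have "y \<in> brackets br (R (s b 1)) (R (neg_form (s b 1)))"
      unfolding brackets_def using x(2) b(4) phi_br phi_R[OF b(2)] by blast
    then show ?thesis using C_s1[OF b(1)] by blast
  qed
qed

lemma iphi_br: "inv phi (br u w) = br (inv phi u) (inv phi w)"
  by (rule injD[OF inj_phi]) (simp add: phi_br)

lemma iphi_gen: "inv phi ` (gA a \<union> gB a) \<subseteq> gA a \<union> gB a"
proof
  fix y assume "y \<in> inv phi ` (gA a \<union> gB a)"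
  then obtain x where x: "x \<in> gA a \<union> gB a" "y = inv phi x" by blast
  show "y \<in> gA a \<union> gB a"
  proof (cases "x \<in> gB a")
    case True
    then obtain b where b: "b \<in> C a" "x \<in> R b" by blast
    then show ?thesis using x(2) iphi_R[OF b(2)] C_ush[OF b(1)] by blast
  next
    case False
    then obtain b u w where b: "b \<in> C a" "u \<in> R b" "w \<in> R (neg_form b)" "x = br u w"
      using x unfolding brackets_def by blast
    have "inv phi w \<in> R (neg_form (ush b))" using iphi_R[OF b(3)] by (simp add: ush_neg)
    then have "y \<in> brackets br (R (ush b)) (R (neg_form (ush b)))"
      unfolding brackets_def using x(2) b(4) iphi_br iphi_R[OF b(2)] by blast
    then show ?thesis using C_ush[OF b(1)] by blast
  qed
qed

lemma phi_LC: "phi ` L_class sm G br phi H a = L_class sm G br phi H a"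
proof
  show "phi ` L_class sm G br phi H a \<subseteq> L_class sm G br phi H a"
    unfolding LC_span lin.span_image[symmetric] by (rule span_mono[OF phi_gen])
  have "inv phi ` L_class sm G br phi H a \<subseteq> L_class sm G br phi H a"
    unfolding LC_span ilin.span_image[symmetric] by (rule span_mono[OF iphi_gen])
  then show "L_class sm G br phi H a \<subseteq> phi ` L_class sm G br phi H a"
    by (metis image_subset_iff phi_inv rev_image_eqI subsetI)
qed


lemma gB_LC: "x \<in> R b \<Longrightarrow> b \<in> C a \<Longrightarrow> x \<in> L_class sm G br phi H a"
  unfolding LC_span by (blast intro: span_base)
lemma gA_LC: "x \<in> gA a \<Longrightarrow> x \<in> L_class sm G br phi H a"
  unfolding LC_span by (blast intro: span_base)
lemma LC_sub: "subspace (L_class sm G br phi H a)" unfolding LC_span by (rule subspace_span)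
lemma LC_0: "0 \<in> L_class sm G br phi H a" using subspace_0[OF LC_sub] .

lemma zero_fadd_root: assumes b: "b \<in> \<Lambda>" and g: "g \<in> \<Lambda>" and e: "fadd (s b 1) (s g 1) = (\<lambda>_. 0)"
  shows "g = neg_form b"
proof
  fix h show "g h = neg_form b h"
  proof (cases "h \<in> Z")
    case True
    have "fadd (s b 1) (s g 1) (phi h) = 0" using e by simp
    then show ?thesis using True phi_Z[OF True] by (simp add: fadd_app s1_in s1_in' neg_app add_eq_0_iff)
  next
    case False then show ?thesis using root_out[OF b False] root_out[OF g False] by (simp add: neg_app)
  qed
qed

lemma case_a: assumes b: "b \<in> C a" and x: "x \<in> R b" and y: "y \<in> H"
  shows "br x y \<in> L_class sm G br phi H a"
proof -
  have "br x y \<in> R (fadd (s b 1) (s (\<lambda>_. 0) 1))" by (rule R_br[OF x H_R0[OF y]])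
  then have "br x y \<in> R (s b 1)" by (simp add: s_zero fadd_comm fadd_zero)
  then show ?thesis using C_s1[OF b] gB_LC by blast
qed

lemma case_b: assumes b: "b \<in> C a" and x: "x \<in> R b" and g: "g \<in> \<Lambda>" and y: "y \<in> R g"
  shows "br x y \<in> L_class sm G br phi H a"
proof -
  let ?d = "fadd (s b 1) (s g 1)"
  have xy: "br x y \<in> R ?d" by (rule R_br[OF x y])
  have bL: "b \<in> \<Lambda>" using C_root[OF b] .
  show ?thesis
  proof (cases "br x y = 0")
    case True then show ?thesis using LC_0 by simp
  next
    case nz: False
    have dd: "?d \<in> H0dual sm G H" using fadd_dual s1_dual root_dual bL g by blast
    show ?thesis
    proof (cases "?d = (\<lambda>_. 0)")
      case True
      then have "g = neg_form b" using zero_fadd_root[OF bL g] by blast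
      then have "br x y \<in> gA a" unfolding brackets_def using b x y by blast
      then show ?thesis by (rule gA_LC)
    next
      case False
      then have dL: "?d \<in> \<Lambda>" using nzroot[OF xy nz dd] by blast
      have "?d \<in> C a" using C_trans[OF b dL conn_c3[OF bL g dL]] .
      then show ?thesis using xy gB_LC by blast
    qed
  qed
qed

lemma case_c: assumes x: "x \<in> gA a" and y: "y \<in> H"
  shows "br x y \<in> L_class sm G br phi H a"
  using H_ab[OF gA_H[OF x] y] LC_0 by simp

lemma case_d: assumes b: "b \<in> C a" and u: "u \<in> R b" and w: "w \<in> R (neg_form b)"
  and g: "g \<in> \<Lambda>" and y: "y \<in> R g"
  shows "br (br u w) y \<in> L_class sm G br phi H a"
proof -
  have bL: "b \<in> \<Lambda>" using C_root[OF b] .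
  have x0: "br u w \<in> R (\<lambda>_. 0)" by (rule brk_R0[OF u w])
  have "br (br u w) y \<in> R (fadd (s (\<lambda>_. 0) 1) (s g 1))" by (rule R_br[OF x0 y])
  then have xy: "br (br u w) y \<in> R (s g 1)" by (simp add: s_zero fadd_zero)
  show ?thesis
  proof (cases "s g 1 \<in> C a")
    case True then show ?thesis using xy gB_LC by blast
  next
    case notC: False
    define y' where "y' = inv phi y"
    have yy: "y = phi y'" unfolding y'_def by simp
    have y'R: "y' \<in> R (ush g)" unfolding y'_def by (rule iphi_R[OF y])
    have sg0: "s (ush g) 1 = g" using s_ush root_out[OF g] by blast
    have sg: "s (ush g) (Suc 0) = g" using sg0 by simp
    have gd: "g \<in> H0dual sm G H" using root_dual[OF g] .
    have bd: "b \<in> H0dual sm G H" using root_dual[OF bL] .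
    have sgL: "s g 1 \<in> \<Lambda>" using s1_root[OF g] .
    have 1: "br (cmp G w c) (cmp G y' e) = 0" for c e
    proof (rule ccontr)
      assume nz: "br (cmp G w c) (cmp G y' e) \<noteq> 0"
      have "br (cmp G w c) (cmp G y' e) \<in> R (fadd (s (neg_form b) 1) (s (ush g) 1))"
        by (rule R_br[OF R_cmp[OF w] R_cmp[OF y'R]])
      then have m: "br (cmp G w c) (cmp G y' e) \<in> R (fadd (neg_form (s b 1)) g)"
        by (simp add: s_neg sg)
      have dd: "fadd (neg_form (s b 1)) g \<in> H0dual sm G H"
        using fadd_dual neg_dual s1_dual bd gd by blast
      have "connected sm G br phi H (s g 1) b"
      proof (cases "fadd (neg_form (s b 1)) g = (\<lambda>_. 0)")
        case True
        then have "g = s b 1"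
        proof (intro ext)
          fix h assume "fadd (neg_form (s b 1)) g = (\<lambda>_. 0)"
          then have "fadd (neg_form (s b 1)) g h = 0" by simp
          then show "g h = s b 1 h" unfolding fadd_app neg_app by (simp add: add_eq_0_iff)
        qed
        then have "s g 1 \<in> PMs b" unfolding PMs_def by (auto simp: s_s)
        then show ?thesis by (rule conn_base[OF sgL])
      next
        case False
        then have "fadd (neg_form (s b 1)) g \<in> \<Lambda>" using nzroot[OF m nz dd] by blast
        then have "fadd g (neg_form (s b 1)) \<in> \<Lambda>" by (simp add: fadd_comm)
        then show ?thesis by (rule conn_c4[OF bL g])
      qed
      then show False using notC C_trans[OF b sgL] by blast
    qed
    have 2: "br (cmp G y' e) (cmp G u c) = 0" for c e
    proof (rule ccontr)
      assume nz: "br (cmp G y' e) (cmp G u c) \<noteq> 0"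
      have "br (cmp G y' e) (cmp G u c) \<in> R (fadd (s (ush g) 1) (s b 1))"
        by (rule R_br[OF R_cmp[OF y'R] R_cmp[OF u]])
      then have m: "br (cmp G y' e) (cmp G u c) \<in> R (fadd g (s b 1))"
        by (simp add: sg)
      have dd: "fadd g (s b 1) \<in> H0dual sm G H"
        using fadd_dual s1_dual bd gd by blast
      have "connected sm G br phi H (s g 1) b"
      proof (cases "fadd g (s b 1) = (\<lambda>_. 0)")
        case True
        then have "g = neg_form (s b 1)"
        proof (intro ext)
          fix h assume "fadd g (s b 1) = (\<lambda>_. 0)"
          then have "fadd g (s b 1) h = 0" by simp
          then show "g h = neg_form (s b 1) h" unfolding fadd_app neg_app by (simp add: add_eq_0_iff)
        qed
        then have "s g 1 \<in> PMs b" unfolding PMs_def by (auto simp: s_s s_neg)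
        then show ?thesis by (rule conn_base[OF sgL])
      next
        case False
        then have "fadd g (s b 1) \<in> \<Lambda>" using nzroot[OF m nz dd] by blast
        then show ?thesis by (rule conn_c5[OF bL g])
      qed
      then show False using notC C_trans[OF b sgL] by blast
    qed
    have "br (br u w) (phi y') = 0" by (rule JV[OF 1 2])
    then show ?thesis using yy LC_0 by simp
  qed
qed


lemma gen_br: assumes x: "x \<in> gA a \<union> gB a" and y: "y \<in> H \<union> (\<Union>g\<in>\<Lambda>. R g)"
  shows "br x y \<in> L_class sm G br phi H a"
proof (cases "x \<in> gB a")
  case True
  then obtain b where b: "b \<in> C a" "x \<in> R b" by blast
  show ?thesis
  proof (cases "y \<in> H")
    case True then show ?thesis using case_a[OF b] by blast
  next
    case False then obtain g where "g \<in> \<Lambda>" "y \<in> R g" using y by blast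
    then show ?thesis using case_b[OF b] by blast
  qed
next
  case False
  then have xA: "x \<in> gA a" using x by blast
  then obtain b u w where b: "b \<in> C a" "u \<in> R b" "w \<in> R (neg_form b)" "x = br u w"
    unfolding brackets_def by blast
  show ?thesis
  proof (cases "y \<in> H")
    case True then show ?thesis using case_c[OF xA] by blast
  next
    case False then obtain g where "g \<in> \<Lambda>" "y \<in> R g" using y by blast
    then show ?thesis using case_d[OF b(1-3)] b(4) by blast
  qed
qed

lemma br_LC1: assumes y: "y \<in> H \<union> (\<Union>g\<in>\<Lambda>. R g)" and x: "x \<in> L_class sm G br phi H a"
  shows "br x y \<in> L_class sm G br phi H a"
proof -
  have "x \<in> span (gA a \<union> gB a)" using x LC_span by simp
  then show ?thesis
  proof (induction rule: span_induct)
    case (step x) then show ?case using gen_br[OF _ y] by blast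
  next
    case base
    show ?case
    proof (rule subspaceI)
      show "0 \<in> {x. br x y \<in> L_class sm G br phi H a}" using LC_0 by simp
    next
      fix x1 x2 assume "x1 \<in> {x. br x y \<in> L_class sm G br phi H a}" "x2 \<in> {x. br x y \<in> L_class sm G br phi H a}"
      then show "x1 + x2 \<in> {x. br x y \<in> L_class sm G br phi H a}"
        using subspace_add[OF LC_sub] by (simp add: br_addl)
    next
      fix c x1 assume "x1 \<in> {x. br x y \<in> L_class sm G br phi H a}"
      then show "sm c x1 \<in> {x. br x y \<in> L_class sm G br phi H a}"
        using subspace_scale[OF LC_sub] by (simp add: br_scl)
    qed
  qed
qed

lemma br_LC: assumes x: "x \<in> L_class sm G br phi H a"
  shows "br x y \<in> L_class sm G br phi H a"
proof -
  have "y \<in> span (H \<union> (\<Union>g\<in>\<Lambda>. R g))" using splt unfolding split_hlc_def by blast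
  then have "\<forall>x\<in>L_class sm G br phi H a. br x y \<in> L_class sm G br phi H a"
  proof (induction rule: span_induct)
    case (step y) then show ?case using br_LC1 by blast
  next
    case base
    show ?case
    proof (rule subspaceI)
      show "0 \<in> {y. \<forall>x\<in>L_class sm G br phi H a. br x y \<in> L_class sm G br phi H a}" using LC_0 by simp
    next
      fix y1 y2 assume "y1 \<in> {y. \<forall>x\<in>L_class sm G br phi H a. br x y \<in> L_class sm G br phi H a}"
        "y2 \<in> {y. \<forall>x\<in>L_class sm G br phi H a. br x y \<in> L_class sm G br phi H a}"
      then show "y1 + y2 \<in> {y. \<forall>x\<in>L_class sm G br phi H a. br x y \<in> L_class sm G br phi H a}"
        using subspace_add[OF LC_sub] by (simp add: br_addr)
    next
      fix c y1 assume "y1 \<in> {y. \<forall>x\<in>L_class sm G br phi H a. br x y \<in> L_class sm G br phi H a}"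
      then show "sm c y1 \<in> {y. \<forall>x\<in>L_class sm G br phi H a. br x y \<in> L_class sm G br phi H a}"
        using subspace_scale[OF LC_sub] by (simp add: br_scr)
    qed
  qed
  then show ?thesis using x by blast
qed

lemma ideal_LC: "hlc_ideal sm G br phi (L_class sm G br phi H a)"
  unfolding hlc_ideal_def using graded_LC br_LC phi_LC by blast


lemma spanA_H: "p \<in> span (gA a) \<Longrightarrow> p \<in> H"
  using span_minimal[of "gA a" H] gA_H H_sub by blast

lemma LC_dec: assumes v: "v \<in> L_class sm G br phi H a"
  shows "\<exists>p F w. p \<in> span (gA a) \<and> finite F \<and> F \<subseteq> C a \<and> (\<forall>c\<in>F. w c \<in> R c) \<and> v = p + sum w F"
proof -
  obtain p q where pq: "p \<in> span (gA a)" "q \<in> span (gB a)" "v = p + q"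
    using v unfolding LC_span span_Un by blast
  obtain F w where "finite F" "F \<subseteq> C a" "\<forall>c\<in>F. w c \<in> R c" "q = sum w F"
    using span_dec[OF pq(2)] by blast
  then show ?thesis using pq by blast
qed

lemma C_sub: "C a \<subseteq> \<Lambda>" using C_root by blast

lemma LC_UNIV: assumes sim: "hlc_simple sm G br phi" and a: "a \<in> \<Lambda>"
  shows "L_class sm G br phi H a = UNIV"
proof -
  have "L_class sm G br phi H a = {0} \<or> L_class sm G br phi H a = UNIV"
    using sim ideal_LC unfolding hlc_simple_def by blast
  moreover obtain x where x: "x \<in> R a" "x \<noteq> 0" using root_R[OF a] by blast
  moreover have "a \<in> C a" unfolding C_iff using a conn_refl[OF a] by blast
  ultimately show ?thesis using gB_LC by blast
qed

lemma simple_conn: assumes sim: "hlc_simple sm G br phi" and a: "a \<in> \<Lambda>" and b: "b \<in> \<Lambda>"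
  shows "b \<in> C a"
proof (rule ccontr)
  assume nb: "b \<notin> C a"
  obtain v where v: "v \<in> R b" "v \<noteq> 0" using root_R[OF b] by blast
  have "v \<in> L_class sm G br phi H a" using LC_UNIV[OF sim a] by simp
  then obtain p F w where d: "p \<in> span (gA a)" "finite F" "F \<subseteq> C a" "\<forall>c\<in>F. w c \<in> R c" "v = p + sum w F"
    using LC_dec by blast
  have pH: "p \<in> H" using spanA_H[OF d(1)] .
  have FL: "F \<subseteq> \<Lambda>" using d(3) C_sub by blast
  have z0: "(\<lambda>_. 0) \<notin> F"
  proof
    assume "(\<lambda>_. 0) \<in> F"
    then have "(\<lambda>_. 0) \<in> \<Lambda>" by (rule subsetD[OF FL])
    then show False using root_nz by metis
  qed
  define w' where "w' = w((\<lambda>_. 0) := p)"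
  have s1: "sum w' (insert (\<lambda>_. 0) F) = p + sum w F"
  proof -
    have "sum w' F = sum w F" unfolding w'_def using z0 by (intro sum.cong) auto
    then show ?thesis using d(2) z0 by (simp add: w'_def)
  qed
  have F1: "finite (insert (\<lambda>_. 0) F)" using d(2) by simp
  have F2: "\<forall>c\<in>insert (\<lambda>_. 0) F. \<forall>h. h \<notin> Z \<longrightarrow> c h = 0" using FL root_out by blast
  have F3: "\<forall>c\<in>insert (\<lambda>_. 0) F. w' c \<in> R c" using d(4) H_R0[OF pH] by (simp add: w'_def)
  have F4: "b \<notin> insert (\<lambda>_. 0) F" using root_nz[OF b] nb d(3) by blast
  have F5: "\<forall>h. h \<notin> Z \<longrightarrow> b h = 0" using root_out[OF b] by blast
  have F6: "- v \<in> R b" using subspace_neg[OF R_sub v(1)] .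
  have F7: "- v + sum w' (insert (\<lambda>_. 0) F) = 0" unfolding s1 d(5) by simp
  have "- v = 0" by (rule direct1[OF F1 F2 F3 F4 F5 F6 F7])
  then show False using v(2) by simp
qed

lemma H_eq: assumes sim: "hlc_simple sm G br phi"
  shows "H = span (\<Union>a\<in>\<Lambda>. brackets br (R a) (R (neg_form a)))"
proof
  show "span (\<Union>a\<in>\<Lambda>. brackets br (R a) (R (neg_form a))) \<subseteq> H"
    by (rule span_minimal[OF _ H_sub]) (use brk_R0 R0_H in \<open>auto simp: brackets_def\<close>)
next
  have ne: "\<Lambda> \<noteq> {}"
  proof
    assume e: "\<Lambda> = {}"
    have "\<And>v. v \<in> H"
    proof -
      fix v
      have "v \<in> span (H \<union> (\<Union>a\<in>\<Lambda>. R a))" using splt unfolding split_hlc_def by blast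
      then show "v \<in> H" using e H_sub by (simp add: span_eq_iff) (metis span_eq_iff)
    qed
    then have "\<And>x y. br x y = 0" using H_ab by blast
    then show False using sim unfolding hlc_simple_def by blast
  qed
  then obtain a where a: "a \<in> \<Lambda>" by blast
  show "H \<subseteq> span (\<Union>a\<in>\<Lambda>. brackets br (R a) (R (neg_form a)))"
  proof
    fix h assume h: "h \<in> H"
    have "h \<in> L_class sm G br phi H a" using LC_UNIV[OF sim a] by simp
    then obtain p F w where d: "p \<in> span (gA a)" "finite F" "F \<subseteq> C a" "\<forall>c\<in>F. w c \<in> R c" "h = p + sum w F"
      using LC_dec by blast
    have pH: "p \<in> H" using spanA_H[OF d(1)] .
    have FL: "F \<subseteq> \<Lambda>" using d(3) C_sub by blast
    have z0: "(\<lambda>_. 0) \<notin> F"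
    proof
      assume "(\<lambda>_. 0) \<in> F"
      then have "(\<lambda>_. 0) \<in> \<Lambda>" by (rule subsetD[OF FL])
      then show False using root_nz by metis
    qed
    have F2: "\<forall>c\<in>F. \<forall>h. h \<notin> Z \<longrightarrow> c h = 0" using FL root_out by blast
    have F6: "p - h \<in> R (\<lambda>_. 0)" using H_R0[OF pH] H_R0[OF h] by (rule subspace_diff[OF R_sub])
    have F7: "(p - h) + sum w F = 0" unfolding d(5) by (simp add: algebra_simps)
    have "p - h = 0" by (rule direct1[OF d(2) F2 d(4) z0 _ F6 F7]) simp
    then have "h = p" by simp
    moreover have "span (gA a) \<subseteq> span (\<Union>a\<in>\<Lambda>. brackets br (R a) (R (neg_form a)))"
      by (rule span_mono) (use C_sub in blast)
    ultimately show "h \<in> span (\<Union>a\<in>\<Lambda>. brackets br (R a) (R (neg_form a)))" using d(1) by blast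
  qed
qed

theorem main:
  "(\<forall>\<alpha>\<in>roots sm G br phi H. hlc_ideal sm G br phi (L_class sm G br phi H \<alpha>)) \<and>
   (hlc_simple sm G br phi \<longrightarrow>
      (\<forall>\<alpha>\<in>roots sm G br phi H. \<forall>\<beta>\<in>roots sm G br phi H. connected sm G br phi H \<alpha> \<beta>) \<and>
      H = module.span sm (\<Union>\<alpha>\<in>roots sm G br phi H.
             brackets br (root_space sm G br phi H \<alpha>) (root_space sm G br phi H (neg_form \<alpha>))))"
proof (intro conjI ballI impI)
  fix a show "hlc_ideal sm G br phi (L_class sm G br phi H a)" by (rule ideal_LC)
next
  fix a b assume sim: "hlc_simple sm G br phi" and a: "a \<in> \<Lambda>" and b: "b \<in> \<Lambda>"
  show "connected sm G br phi H a b" using simple_conn[OF sim b a] unfolding C_iff by blast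
next
  assume sim: "hlc_simple sm G br phi"
  show "H = span (\<Union>a\<in>\<Lambda>. brackets br (R a) (R (neg_form a)))" by (rule H_eq[OF sim])
qed

end

theorem mainTheorem9:
  fixes sm :: "'k::field \<Rightarrow> 'v::ab_group_add \<Rightarrow> 'v"
    and G :: "'g::ab_group_add \<Rightarrow> 'v set"
    and br :: "'v \<Rightarrow> 'v \<Rightarrow> 'v"
    and phi :: "'v \<Rightarrow> 'v"
    and eps :: "'g \<Rightarrow> 'g \<Rightarrow> 'k"
    and H :: "'v set"
  assumes "hom_lie_color sm G br phi eps"
    and "bij phi"
    and "max_abelian_subalgebra sm G br phi H"
    and "split_hlc sm G br phi H"
    and "symmetric_roots sm G br phi H"
  shows "(\<forall>\<alpha>\<in>roots sm G br phi H. hlc_ideal sm G br phi (L_class sm G br phi H \<alpha>)) \<and>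
         (hlc_simple sm G br phi \<longrightarrow>
            (\<forall>\<alpha>\<in>roots sm G br phi H. \<forall>\<beta>\<in>roots sm G br phi H. connected sm G br phi H \<alpha> \<beta>) \<and>
            H = module.span sm (\<Union>\<alpha>\<in>roots sm G br phi H.
                   brackets br (root_space sm G br phi H \<alpha>) (root_space sm G br phi H (neg_form \<alpha>))))"
proof -
  interpret HLC sm G br phi eps H using assms by (unfold_locales)
  show ?thesis by (rule main)
qed

end
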